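(* In the queueing model of the context, fix a class $k$, $\theta\ge0$ and $\vec z\in[0,1]^n$. Writing $\Lambda(\vec z)=\sum_{i=1}^n\lambda_i(1-z_i)$ and $\Lambda_{\ge k}(\vec z)=\sum_{i\ge k}\lambda_i(1-z_i)$, the service-arrival joint transform of a single class $k$ overhead chain is \[ \widetilde{\mathcal O}_k(\theta,\vec z)=\frac{\widetilde{C_k}(\theta+\Lambda(\vec z))\,\widetilde{D_k}(\theta+\Lambda_{\ge k}(\vec z)+\lambda_{<k})}{1-\widetilde{C_k}(\theta+\Lambda(\vec z))\bigl(\widetilde{D_k}(\theta+\Lambda(\vec z))-\widetilde{D_k}(\theta+\Lambda_{\ge k}(\vec z)+\lambda_{<k})\bigr)}. \]
   Context: Model: a single server; job classes $1,\dots,n$. Class $i$ jobs arrive according to independent Poisson processes of rates $\lambda_i>0$; original sizes of class $i$ jobs are i.i.d. with positive distribution $S_i$. Scheduling is preemptive priority (lower index = higher priority, FCFS within class, preempt-resume) with preemption overhead: (a) a job arriving to an empty system begins service; (b) when a class $k$ job in service is preempted by the arrival of a class $<k$ job, its service stops and a class $k$ pause begins; (c) whenever a job or a pause completes and jobs remain, the best-priority job is identified: if it is a previously paused class $k$ job a class $k$ resume begins, otherwise that job begins service; (d) when a class $k$ resume completes, if any class $<k$ job arrived during the resume it fails and a class $k$ pause begins, otherwise it succeeds and the class $k$ job continues service. Pauses and resumes are nonpreemptible; class $k$ pause lengths are i.i.d. $\sim C_k$, class $k$ resume lengths i.i.d. $\sim D_k$, independent of everything else. $\lambda_{<k}=\sum_{i<k}\lambda_i$;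 $\widetilde X(\theta)=\mathbb E[e^{-\theta X}]$. A class $k$ overhead chain is the sequence of pause and resume overheads between a class $k$ job being preempted and it next continuing service towards its original size (pause–resume pairs, continuing as long as resumes fail). If $L$ is its total length and $N_i$ the number of class $i$ arrivals during it, its service-arrival joint transform is $\widetilde{\mathcal O}_k(\theta,\vec z)=\mathbb E[e^{-\theta L}\prod_{i=1}^n z_i^{N_i}]$. *)

theory Defs
  imports "HOL-Probability.Probability"
begin

definition lst :: "real measure \<Rightarrow> real \<Rightarrow> real" where
  "lst mu s = integral\<^sup>L mu (\<lambda>x. exp (- s * x))"

text \<open>Sources of randomness of a class k overhead chain: the m-th interarrival time
  (m = 0,1,...) of class i (a Poisson process is given by i.i.d. exponential
  interarrival times), and the length of the j-th pause and j-th resume (j = 0,1,...).\<close>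
datatype src = Arr nat nat | Pause nat | Resume nat

definition src_rv ::
  "(nat \<Rightarrow> nat \<Rightarrow> 'a \<Rightarrow> real) \<Rightarrow> (nat \<Rightarrow> 'a \<Rightarrow> real) \<Rightarrow> (nat \<Rightarrow> 'a \<Rightarrow> real) \<Rightarrow> src \<Rightarrow> 'a \<Rightarrow> real" where
  "src_rv A Cs Ds s = (case s of Arr i m \<Rightarrow> A i m | Pause j \<Rightarrow> Cs j | Resume j \<Rightarrow> Ds j)"

text \<open>Time of the m-th (0-based) class i arrival, measured in overhead time from the preemption.\<close>
definition arr_time :: "(nat \<Rightarrow> nat \<Rightarrow> 'a \<Rightarrow> real) \<Rightarrow> nat \<Rightarrow> nat \<Rightarrow> 'a \<Rightarrow> real" where
  "arr_time A i m \<omega> = (\<Sum>l\<le>m. A i l \<omega>)"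

definition arr_count :: "(nat \<Rightarrow> nat \<Rightarrow> 'a \<Rightarrow> real) \<Rightarrow> nat \<Rightarrow> real \<Rightarrow> real \<Rightarrow> 'a \<Rightarrow> nat" where
  "arr_count A i a b \<omega> = card {m. a < arr_time A i m \<omega> \<and> arr_time A i m \<omega> \<le> b}"

definition round_start :: "(nat \<Rightarrow> 'a \<Rightarrow> real) \<Rightarrow> (nat \<Rightarrow> 'a \<Rightarrow> real) \<Rightarrow> nat \<Rightarrow> 'a \<Rightarrow> real" where
  "round_start Cs Ds j \<omega> = (\<Sum>l<j. Cs l \<omega> + Ds l \<omega>)"

definition resume_fails ::
  "nat \<Rightarrow> (nat \<Rightarrow> nat \<Rightarrow> 'a \<Rightarrow> real) \<Rightarrow> (nat \<Rightarrow> 'a \<Rightarrow> real) \<Rightarrow> (nat \<Rightarrow> 'a \<Rightarrow> real) \<Rightarrow> nat \<Rightarrow> 'a \<Rightarrow> bool" where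
  "resume_fails k A Cs Ds j \<omega> =
     (\<exists>i\<in>{1..<k}. arr_count A i (round_start Cs Ds j \<omega> + Cs j \<omega>)
                                  (round_start Cs Ds j \<omega> + Cs j \<omega> + Ds j \<omega>) \<omega> > 0)"

text \<open>Total length L of the chain: all pause-resume pairs up to and including the first
  successful resume. (On the null event that no resume ever succeeds the value is
  irrelevant.)\<close>
definition chain_len ::
  "nat \<Rightarrow> (nat \<Rightarrow> nat \<Rightarrow> 'a \<Rightarrow> real) \<Rightarrow> (nat \<Rightarrow> 'a \<Rightarrow> real) \<Rightarrow> (nat \<Rightarrow> 'a \<Rightarrow> real) \<Rightarrow> 'a \<Rightarrow> real" where
  "chain_len k A Cs Ds \<omega> =
     round_start Cs Ds (Suc (LEAST j. \<not> resume_fails k A Cs Ds j \<omega>)) \<omega>"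

definition chain_arrivals ::
  "nat \<Rightarrow> (nat \<Rightarrow> nat \<Rightarrow> 'a \<Rightarrow> real) \<Rightarrow> (nat \<Rightarrow> 'a \<Rightarrow> real) \<Rightarrow> (nat \<Rightarrow> 'a \<Rightarrow> real) \<Rightarrow> nat \<Rightarrow> 'a \<Rightarrow> nat" where
  "chain_arrivals k A Cs Ds i \<omega> = arr_count A i 0 (chain_len k A Cs Ds \<omega>) \<omega>"

definition overhead_transform ::
  "'a measure \<Rightarrow> nat \<Rightarrow> nat \<Rightarrow> (nat \<Rightarrow> nat \<Rightarrow> 'a \<Rightarrow> real) \<Rightarrow> (nat \<Rightarrow> 'a \<Rightarrow> real) \<Rightarrow> (nat \<Rightarrow> 'a \<Rightarrow> real)
     \<Rightarrow> real \<Rightarrow> (nat \<Rightarrow> real) \<Rightarrow> real" where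
  "overhead_transform M n k A Cs Ds \<theta> z =
     integral\<^sup>L M (\<lambda>\<omega>. exp (- \<theta> * chain_len k A Cs Ds \<omega>) *
                        (\<Prod>i\<in>{1..n}. z i ^ chain_arrivals k A Cs Ds i \<omega>))"

end

theory Submission
  imports Defs
begin

definition tg :: "(nat \<Rightarrow> real) \<Rightarrow> nat \<Rightarrow> real" where
  "tg u q = (\<Sum>p<q. u p)"

definition gw :: "(nat \<Rightarrow> real) \<Rightarrow> (nat \<Rightarrow> real) \<Rightarrow> nat \<Rightarrow> real \<Rightarrow> real" where
  "gw u w Q s = (\<Prod>q<Q. if tg u q < s \<and> s \<le> tg u (Suc q) then w q else 1)"

definition GG :: "(nat \<Rightarrow> real) \<Rightarrow> (nat \<Rightarrow> real) \<Rightarrow> nat \<Rightarrow> real \<Rightarrow> real" where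
  "GG u w Q s = (\<Sum>q<Q. (1 - w q) * (max (tg u (Suc q)) s - max (tg u q) s))"

definition HH :: "real \<Rightarrow> (nat \<Rightarrow> real) \<Rightarrow> (nat \<Rightarrow> real) \<Rightarrow> nat \<Rightarrow> real \<Rightarrow> real" where
  "HH l u w Q s = exp (- l * GG u w Q s)"

lemma tg_mono: assumes "\<And>p. 0 \<le> u p" "q \<le> q'" shows "tg u q \<le> tg u q'"
  unfolding tg_def using assms by (intro sum_mono2) auto

lemma gw_one_above:
  assumes u: "\<And>p. 0 \<le> u p" and s: "tg u Q < s" shows "gw u w Q s = 1"
  unfolding gw_def
proof (intro prod.neutral ballI)
  fix q assume "q \<in> {..<Q}"
  then have "tg u (Suc q) \<le> tg u Q" using tg_mono[where u=u, OF u] by auto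
  then show "(if tg u q < s \<and> s \<le> tg u (Suc q) then w q else 1) = 1" using s by auto
qed

lemma GG_above: assumes u: "\<And>p. 0 \<le> u p" and s: "tg u Q \<le> s" shows "GG u w Q s = 0"
  unfolding GG_def
proof (intro sum.neutral ballI)
  fix q assume "q \<in> {..<Q}"
  then have "tg u (Suc q) \<le> tg u Q" "tg u q \<le> tg u Q" using tg_mono[where u=u, OF u] by auto
  then show "(1 - w q) * (max (tg u (Suc q)) s - max (tg u q) s) = 0" using s by auto
qed

lemma GG_zero: assumes u: "\<And>p. 0 \<le> u p" shows "GG u w Q 0 = (\<Sum>q<Q. (1 - w q) * u q)"
  unfolding GG_def
proof (intro sum.cong refl)
  fix q
  have "0 \<le> tg u q" unfolding tg_def using u by (auto intro: sum_nonneg)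
  moreover have "tg u (Suc q) = tg u q + u q" by (simp add: tg_def)
  ultimately show "(1 - w q) * (max (tg u (Suc q)) 0 - max (tg u q) 0) = (1 - w q) * u q"
    using u[of q] by simp
qed

lemma one_minus_gw:
  assumes u: "\<And>p. 0 \<le> u p"
  shows "1 - gw u w Q s = (\<Sum>q<Q. (1 - w q) * ((if tg u q < s then 1 else 0) - (if tg u (Suc q) < s then 1 else 0)))"
proof (induction Q)
  case 0 then show ?case by (simp add: gw_def)
next
  case (Suc Q)
  have eq: "(if tg u Q < s then 1 else 0) - (if tg u (Suc Q) < s then 1 else 0)
      = (if tg u Q < s \<and> s \<le> tg u (Suc Q) then 1 else (0::real))"
    using tg_mono[where u=u, OF u, of Q "Suc Q"] by auto
  show ?case
  proof (cases "tg u Q < s \<and> s \<le> tg u (Suc Q)")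
    case True
    then have "gw u w Q s = 1" by (intro gw_one_above[OF u]) auto
    moreover have "(\<Sum>q<Q. (1 - w q) * ((if tg u q < s then 1 else 0) - (if tg u (Suc q) < s then 1 else 0))) = 0"
    proof (intro sum.neutral ballI)
      fix q assume "q \<in> {..<Q}"
      then have "tg u (Suc q) \<le> tg u Q" "tg u q \<le> tg u Q" using tg_mono[where u=u, OF u] by auto
      then show "(1 - w q) * ((if tg u q < s then 1 else 0) - (if tg u (Suc q) < s then 1 else 0)) = 0"
        using True by auto
    qed
    moreover have "gw u w (Suc Q) s = gw u w Q s * w Q" unfolding gw_def prod.lessThan_Suc if_P[OF True] ..
    ultimately have g1: "gw u w (Suc Q) s = w Q" by simp
    moreover have "(\<Sum>q<Suc Q. (1 - w q) * ((if tg u q < s then 1 else 0) - (if tg u (Suc q) < s then 1 else 0)))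
      = (\<Sum>q<Q. (1 - w q) * ((if tg u q < s then 1 else 0) - (if tg u (Suc q) < s then 1 else 0))) + (1 - w Q)"
      unfolding sum.lessThan_Suc eq if_P[OF True] by (simp only: mult_1_right)
    ultimately show ?thesis using g1 \<open>(\<Sum>q<Q. _) = 0\<close> by linarith
  next
    case False
    have "gw u w (Suc Q) s = gw u w Q s" unfolding gw_def prod.lessThan_Suc if_not_P[OF False] by (simp only: mult_1_right)
    moreover have "(\<Sum>q<Suc Q. (1 - w q) * ((if tg u q < s then 1 else 0) - (if tg u (Suc q) < s then 1 else 0)))
      = (\<Sum>q<Q. (1 - w q) * ((if tg u q < s then 1 else 0) - (if tg u (Suc q) < s then 1 else 0)))"
      unfolding sum.lessThan_Suc eq if_not_P[OF False] by (simp only: mult_zero_right add_0_right)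
    ultimately show ?thesis using Suc.IH by linarith
  qed
qed

lemma deriv_max:
  fixes c s :: real assumes "s \<noteq> c"
  shows "((\<lambda>x. max c x) has_real_derivative (if c < s then 1 else 0)) (at s)"
proof (cases "c < s")
  case True
  have "((\<lambda>x. max c x) has_real_derivative 1) (at s)"
  proof (rule has_field_derivative_transform_within_open[OF DERIV_ident, of "{c<..}"])
    show "open {c<..}" by simp
    show "s \<in> {c<..}" using True by simp
    fix x assume "x \<in> {c<..}" then show "x = max c x" by simp
  qed
  then show ?thesis using True by simp
next
  case False
  then have "s < c" using assms by auto
  have "((\<lambda>x. max c x) has_real_derivative 0) (at s)"
  proof (rule has_field_derivative_transform_within_open[OF DERIV_const, of "{..<c}"])
    show "open {..<c}" by simp
    show "s \<in> {..<c}" using \<open>s < c\<close> by simp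
    fix x assume "x \<in> {..<c}" then show "c = max c x" by simp
  qed
  then show ?thesis using False by simp
qed

lemma GG_deriv:
  assumes u: "\<And>p. 0 \<le> u p" and s: "s \<notin> tg u ` {..Q}"
  shows "(GG u w Q has_real_derivative (- (1 - gw u w Q s))) (at s)"
proof -
  have "(GG u w Q has_real_derivative
     (\<Sum>q<Q. (1 - w q) * ((if tg u (Suc q) < s then 1 else 0) - (if tg u q < s then 1 else 0)))) (at s)"
    unfolding GG_def
  proof (intro DERIV_sum DERIV_cmult DERIV_diff deriv_max)
    fix q assume "q \<in> {..<Q}"
    then show "s \<noteq> tg u (Suc q)" "s \<noteq> tg u q" using s by auto
  qed
  moreover have "(\<Sum>q<Q. (1 - w q) * ((if tg u (Suc q) < s then 1 else 0) - (if tg u q < s then 1 else 0)))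
     = - (1 - gw u w Q s)"
    unfolding one_minus_gw[OF u] sum_negf[symmetric] by (intro sum.cong) auto
  ultimately show ?thesis by simp
qed

lemma GG_cont: "continuous_on UNIV (GG u w Q)"
  unfolding GG_def by (intro continuous_intros)

lemma HH_pos: "0 < HH l u w Q s" by (simp add: HH_def)

lemma HH_above: assumes u: "\<And>p. 0 \<le> u p" and s: "tg u Q \<le> s" shows "HH l u w Q s = 1"
  by (simp add: HH_def GG_above[OF u s])

lemma gw_nonneg: assumes "\<And>q. 0 \<le> w q" shows "0 \<le> gw u w Q s"
  unfolding gw_def using assms by (intro prod_nonneg) auto

lemma gw_le1: assumes "\<And>q. 0 \<le> w q" "\<And>q. w q \<le> 1" shows "gw u w Q s \<le> 1"
  unfolding gw_def using assms by (intro prod_le_1) auto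

lemma HH_le1: assumes "0 \<le> l" "\<And>q. w q \<le> 1" "\<And>p. 0 \<le> u p" shows "HH l u w Q s \<le> 1"
proof -
  have "0 \<le> GG u w Q s" unfolding GG_def
  proof (intro sum_nonneg mult_nonneg_nonneg)
    fix q
    have "tg u q \<le> tg u (Suc q)" using tg_mono[where u=u, OF assms(3)] by auto
    then show "0 \<le> max (tg u (Suc q)) s - max (tg u q) s" by (auto simp: max_def)
    show "0 \<le> 1 - w q" using assms(2)[of q] by simp
  qed
  then show ?thesis unfolding HH_def using mult_nonneg_nonneg[OF assms(1) \<open>0 \<le> GG u w Q s\<close>] by simp
qed

lemma gw_meas[measurable]: "gw u w Q \<in> borel_measurable borel"
  unfolding gw_def
proof (rule borel_measurable_prod)
  fix q
  have "{x \<in> space borel. tg u q < x \<and> x \<le> tg u (Suc q)} = {tg u q<..tg u (Suc q)}" by auto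
  then have S: "{x \<in> space borel. tg u q < x \<and> x \<le> tg u (Suc q)} \<in> sets borel" by simp
  show "(\<lambda>s. if tg u q < s \<and> s \<le> tg u (Suc q) then w q else 1) \<in> borel_measurable borel"
    by (rule measurable_If[OF _ _ S]) auto
qed

lemma HH_cont: "continuous_on UNIV (HH l u w Q)"
  unfolding HH_def GG_def by (intro continuous_intros)

lemma HH_meas[measurable]: "HH l u w Q \<in> borel_measurable borel"
  by (rule borel_measurable_continuous_onI[OF HH_cont])

lemma key_integral:
  assumes l: "0 < l" and u: "\<And>p. 0 \<le> u p" and w0: "\<And>q. 0 \<le> w q" and w1: "\<And>q. w q \<le> 1"
  shows "(\<integral>\<^sup>+x. ennreal (gw u w Q (t + x) * HH l u w Q (t + x)) \<partial>density lborel (exponential_density l))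
       = ennreal (HH l u w Q t)"
proof -
  define f where "f x = l * exp (- x * l) * (gw u w Q (t + x) * HH l u w Q (t + x))" for x
  define B where "B = \<bar>tg u Q - t\<bar> + 1"
  have B: "0 < B" "tg u Q < t + B" unfolding B_def by auto
  define F where "F x = - (exp (- l * x) * HH l u w Q (t + x))" for x
  define S where "S = (\<lambda>s. s - t) ` tg u ` {..Q}"
  have finS: "finite S" unfolding S_def by simp
  have der: "(F has_vector_derivative f x) (at x)" if x: "x \<in> {0<..<B} - S" for x
  proof -
    have tx: "t + x \<notin> tg u ` {..Q}" using x unfolding S_def by force
    have d0: "(GG u w Q has_real_derivative - (1 - gw u w Q (t + x))) (at (x + t))"
      using GG_deriv[OF u tx] by (simp add: add.commute)
    have d1: "((\<lambda>x. GG u w Q (x + t)) has_real_derivative - (1 - gw u w Q (t + x))) (at x)"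
      using DERIV_shift[THEN iffD1, OF d0] .
    have d1': "((\<lambda>x. GG u w Q (t + x)) has_real_derivative - (1 - gw u w Q (t + x))) (at x)"
      using d1 by (simp add: add.commute)
    have e1: "((\<lambda>x. exp (- l * x)) has_real_derivative (exp (- l * x) * (- l))) (at x)"
      by (auto intro!: derivative_eq_intros)
    have e2: "((\<lambda>x. exp (- l * GG u w Q (t + x))) has_real_derivative
        (exp (- l * GG u w Q (t + x)) * (- l * - (1 - gw u w Q (t + x))))) (at x)"
      by (rule DERIV_chain2[OF DERIV_exp]) (rule DERIV_cmult[OF d1'])
    have e3: "(F has_real_derivative
       - (exp (- l * x) * (- l) * exp (- l * GG u w Q (t + x)) + 
          (exp (- l * GG u w Q (t + x)) * (- l * - (1 - gw u w Q (t + x)))) * exp (- l * x))) (at x)"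
      unfolding F_def HH_def by (rule DERIV_minus[OF DERIV_mult[OF e1 e2]])
    have "- (exp (- l * x) * (- l) * exp (- l * GG u w Q (t + x)) + 
          (exp (- l * GG u w Q (t + x)) * (- l * - (1 - gw u w Q (t + x)))) * exp (- l * x)) = f x"
      unfolding f_def HH_def by (simp add: algebra_simps)
    then show ?thesis using e3 by (simp add: has_real_derivative_iff_has_vector_derivative)
  qed
  have contH: "continuous_on {0..B} (\<lambda>x. HH l u w Q (t + x))"
    by (rule continuous_on_compose2[OF HH_cont]) (auto intro!: continuous_intros)
  have contF: "continuous_on {0..B} F"
    unfolding F_def by (intro continuous_intros contH)
  have I1: "(f has_integral (F B - F 0)) {0..B}"
    by (rule fundamental_theorem_of_calculus_interior_strong[OF finS]) (use B der contF in auto)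
  have FB: "F B - F 0 = HH l u w Q t - exp (- l * B)"
    unfolding F_def using HH_above[OF u, where Q=Q and s="t + B" and l=l and w=w] B by simp
  have I2': "((\<lambda>x. l * exp (- l * x)) has_integral (l * (exp (- l * B) / l))) {B..}"
    by (rule has_integral_mult_right[OF has_integral_exp_minus_to_infinity[OF l]])
  have I2: "(f has_integral exp (- l * B)) {B..}"
  proof -
    have "f x = l * exp (- l * x)" if "x \<in> {B..}" for x
    proof -
      have "tg u Q < t + x" using that B by auto
      then show ?thesis unfolding f_def using gw_one_above[where u=u, OF u] HH_above[OF u, where Q=Q and s="t + x" and l=l and w=w]
        by (simp add: mult.commute)
    qed
    then show ?thesis using I2' l by (subst has_integral_cong) auto
  qed
  have neg: "negligible ({0..B} \<inter> {B..})"
  proof -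
    have "{0..B} \<inter> {B..} = {B}" using B by auto
    then show ?thesis by simp
  qed
  have I: "(f has_integral (HH l u w Q t)) {0..}"
  proof -
    have "(f has_integral (F B - F 0 + exp (- l * B))) ({0..B} \<union> {B..})"
      by (rule has_integral_Un[OF I1 I2 neg])
    moreover have "{0..B} \<union> {B..} = {0::real..}" using B by auto
    ultimately show ?thesis using FB by simp
  qed
  have fnn: "0 \<le> f x" for x
    unfolding f_def using l gw_nonneg[where w=w, OF w0] less_imp_le[OF HH_pos] by (intro mult_nonneg_nonneg) auto
  have "(\<integral>\<^sup>+x. ennreal (f x) * indicator {0..} x \<partial>lborel) = ennreal (HH l u w Q t)"
    by (rule nn_integral_has_integral_lebesgue'[OF _ I]) (use fnn in auto)
  moreover have "(\<integral>\<^sup>+x. ennreal (gw u w Q (t + x) * HH l u w Q (t + x)) \<partial>density lborel (exponential_density l))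
     = (\<integral>\<^sup>+x. ennreal (exponential_density l x) * ennreal (gw u w Q (t + x) * HH l u w Q (t + x)) \<partial>lborel)"
    by (subst nn_integral_density) auto
  moreover have "ennreal (exponential_density l x) * ennreal (gw u w Q (t + x) * HH l u w Q (t + x))
     = ennreal (f x) * indicator {0..} x" for x
  proof (cases "x < 0")
    case True then show ?thesis by (simp add: exponential_density_def)
  next
    case False
    have "0 \<le> gw u w Q (t + x) * HH l u w Q (t + x)"
      using gw_nonneg[where w=w, OF w0] HH_pos by (intro mult_nonneg_nonneg) (auto intro: less_imp_le)
    then show ?thesis using False l
      by (simp add: exponential_density_def f_def ennreal_mult[symmetric] indicator_def)
  qed
  ultimately show ?thesis by simp
qed

lemma (in prob_space) nn_integral_seq:
  assumes [measurable]: "f \<in> borel_measurable (PiM UNIV (\<lambda>_::nat. M))"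
  shows "(\<integral>\<^sup>+X. f X \<partial>PiM UNIV (\<lambda>_::nat. M)) = (\<integral>\<^sup>+x. \<integral>\<^sup>+X. f (case_nat x X) \<partial>PiM UNIV (\<lambda>_::nat. M) \<partial>M)"
proof -
  interpret S: sequence_space M ..
  interpret P: pair_sigma_finite M "\<Pi>\<^sub>M i::nat\<in>UNIV. M" ..
  have "(\<integral>\<^sup>+X. f X \<partial>S.S) = (\<integral>\<^sup>+X. f ((\<lambda>(s, \<omega>). case_nat s \<omega>) X) \<partial>(M \<Otimes>\<^sub>M S.S))"
    by (subst S.PiM_iter[symmetric]) (simp add: nn_integral_distr)
  also have "\<dots> = (\<integral>\<^sup>+x. \<integral>\<^sup>+X. f ((\<lambda>(s, \<omega>). case_nat s \<omega>) (x, X)) \<partial>S.S \<partial>M)"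
    by (subst S.nn_integral_fst) simp_all
  finally show ?thesis by simp
qed

abbreviation ExpM :: "real \<Rightarrow> real measure" where
  "ExpM l \<equiv> density lborel (exponential_density l)"

abbreviation SeqM :: "real \<Rightarrow> (nat \<Rightarrow> real) measure" where
  "SeqM l \<equiv> PiM UNIV (\<lambda>_::nat. ExpM l)"

definition QQ :: "real \<Rightarrow> (nat \<Rightarrow> real) \<Rightarrow> (nat \<Rightarrow> real) \<Rightarrow> nat \<Rightarrow> nat \<Rightarrow> real \<Rightarrow> (nat \<Rightarrow> real) \<Rightarrow> real" where
  "QQ l u w Q M t x = (\<Prod>m<M. gw u w Q (t + (\<Sum>i\<le>m. x i))) * HH l u w Q (t + (\<Sum>i<M. x i))"

lemma QQ_Suc: "QQ l u w Q (Suc M) t (case_nat s y) = gw u w Q (t + s) * QQ l u w Q M (t + s) y"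
proof -
  have a: "(\<Sum>i\<le>Suc m. case_nat s y i) = s + (\<Sum>i\<le>m. y i)" for m
    by (subst sum.atMost_Suc_shift) simp
  have b: "(\<Sum>i<Suc M. case_nat s y i) = s + (\<Sum>i<M. y i)"
    by (subst sum.lessThan_Suc_shift) simp
  show ?thesis unfolding QQ_def prod.lessThan_Suc_shift b a
    by (simp add: add.assoc)
qed

lemma QQ_meas[measurable]: "(\<lambda>x. QQ l u w Q M t x) \<in> borel_measurable (SeqM l)"
  unfolding QQ_def by measurable

lemma QQ_nonneg: assumes "\<And>q. 0 \<le> w q" shows "0 \<le> QQ l u w Q M t x"
  unfolding QQ_def using assms gw_nonneg[where w=w] less_imp_le[OF HH_pos]
  by (intro mult_nonneg_nonneg prod_nonneg) auto

lemma QQ_le1: assumes "0 \<le> l" "\<And>q. 0 \<le> w q" "\<And>q. w q \<le> 1" "\<And>p. 0 \<le> u p"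
  shows "QQ l u w Q M t x \<le> 1"
  unfolding QQ_def
proof (rule mult_le_one)
  show "(\<Prod>m<M. gw u w Q (t + sum x {..m})) \<le> 1"
    using gw_nonneg[where w=w, OF assms(2)] gw_le1[where w=w, OF assms(2,3)] by (intro prod_le_1) auto
  show "0 \<le> HH l u w Q (t + sum x {..<M})" using less_imp_le[OF HH_pos] .
  show "HH l u w Q (t + sum x {..<M}) \<le> 1" using HH_le1[where w=w and u=u, OF assms(1,3,4)] .
qed

lemma QQ_integral:
  assumes l: "0 < l" and u: "\<And>p. 0 \<le> u p" and w0: "\<And>q. 0 \<le> w q" and w1: "\<And>q. w q \<le> 1"
  shows "(\<integral>\<^sup>+x. ennreal (QQ l u w Q M t x) \<partial>SeqM l) = ennreal (HH l u w Q t)"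
proof (induction M arbitrary: t)
  case 0
  interpret E: prob_space "ExpM l" using prob_space_exponential_density[OF l] .
  interpret S: sequence_space "ExpM l" ..
  show ?case by (simp add: QQ_def S.emeasure_space_1)
next
  case (Suc M)
  interpret E: prob_space "ExpM l" using prob_space_exponential_density[OF l] .
  have "(\<integral>\<^sup>+x. ennreal (QQ l u w Q (Suc M) t x) \<partial>SeqM l)
      = (\<integral>\<^sup>+s. \<integral>\<^sup>+y. ennreal (QQ l u w Q (Suc M) t (case_nat s y)) \<partial>SeqM l \<partial>ExpM l)"
    by (rule E.nn_integral_seq) measurable
  also have "\<dots> = (\<integral>\<^sup>+s. ennreal (gw u w Q (t + s)) * (\<integral>\<^sup>+y. ennreal (QQ l u w Q M (t + s) y) \<partial>SeqM l) \<partial>ExpM l)"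
    unfolding QQ_Suc
    by (intro nn_integral_cong, subst nn_integral_cmult[symmetric])
       (auto simp: ennreal_mult gw_nonneg[where w=w, OF w0] QQ_nonneg[where w=w, OF w0] intro!: nn_integral_cong)
  also have "\<dots> = (\<integral>\<^sup>+s. ennreal (gw u w Q (t + s) * HH l u w Q (t + s)) \<partial>ExpM l)"
    unfolding Suc.IH by (intro nn_integral_cong) (auto simp: ennreal_mult gw_nonneg[where w=w, OF w0] less_imp_le[OF HH_pos])
  also have "\<dots> = ennreal (HH l u w Q t)"
    by (rule key_integral[OF l u w0 w1])
  finally show ?case .
qed

lemma exp_moment1:
  assumes l: "0 < l"
  shows "(\<integral>\<^sup>+s. ennreal (exp (- s)) \<partial>ExpM l) = ennreal (l / (l + 1))"
proof -
  have I: "((\<lambda>x. l * exp (- (l + 1) * x)) has_integral (l * (exp (- (l + 1) * 0) / (l + 1)))) {0..}"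
    by (rule has_integral_mult_right[OF has_integral_exp_minus_to_infinity]) (use l in simp)
  have "(\<integral>\<^sup>+s. ennreal (exp (- s)) \<partial>ExpM l) = (\<integral>\<^sup>+x. ennreal (exponential_density l x) * ennreal (exp (- x)) \<partial>lborel)"
    by (subst nn_integral_density) auto
  also have "\<dots> = (\<integral>\<^sup>+x. ennreal (l * exp (- (l + 1) * x)) * indicator {0..} x \<partial>lborel)"
  proof (intro nn_integral_cong)
    fix x :: real
    show "ennreal (exponential_density l x) * ennreal (exp (- x)) = ennreal (l * exp (- (l + 1) * x)) * indicator {0..} x"
    proof (cases "x < 0")
      case True then show ?thesis by (simp add: exponential_density_def)
    next
      case False
      have "l * exp (- x * l) * exp (- x) = l * exp (- (l + 1) * x)"
        by (simp add: algebra_simps flip: exp_add)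
      then show ?thesis using False l
        by (simp add: exponential_density_def ennreal_mult[symmetric])
    qed
  qed
  also have "\<dots> = ennreal (l * (exp (- (l + 1) * 0) / (l + 1)))"
    by (rule nn_integral_has_integral_lebesgue'[OF _ I]) (use l in auto)
  finally show ?thesis by simp
qed

lemma exp_moment:
  assumes l: "0 < l"
  shows "(\<integral>\<^sup>+x. ennreal (exp (- (\<Sum>i<M. x i))) \<partial>SeqM l) = ennreal ((l / (l + 1)) ^ M)"
proof (induction M)
  case 0
  interpret E: prob_space "ExpM l" using prob_space_exponential_density[OF l] .
  interpret S: sequence_space "ExpM l" ..
  show ?case by (simp add: S.emeasure_space_1)
next
  case (Suc M)
  interpret E: prob_space "ExpM l" using prob_space_exponential_density[OF l] .
  have "(\<integral>\<^sup>+x. ennreal (exp (- (\<Sum>i<Suc M. x i))) \<partial>SeqM l)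
      = (\<integral>\<^sup>+s. \<integral>\<^sup>+y. ennreal (exp (- (\<Sum>i<Suc M. case_nat s y i))) \<partial>SeqM l \<partial>ExpM l)"
    by (rule E.nn_integral_seq) measurable
  also have "\<dots> = (\<integral>\<^sup>+s. ennreal (exp (- s)) * (\<integral>\<^sup>+y. ennreal (exp (- (\<Sum>i<M. y i))) \<partial>SeqM l) \<partial>ExpM l)"
  proof (intro nn_integral_cong)
    fix s :: real
    have "(\<Sum>i<Suc M. case_nat s y i) = s + (\<Sum>i<M. y i)" for y :: "nat \<Rightarrow> real"
      by (subst sum.lessThan_Suc_shift) simp
    then have "ennreal (exp (- (\<Sum>i<Suc M. case_nat s y i))) = ennreal (exp (- s)) * ennreal (exp (- (\<Sum>i<M. y i)))" for y :: "nat \<Rightarrow> real"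
      by (simp add: ennreal_mult[symmetric] flip: exp_add)
    then show "(\<integral>\<^sup>+y. ennreal (exp (- (\<Sum>i<Suc M. case_nat s y i))) \<partial>SeqM l)
      = ennreal (exp (- s)) * (\<integral>\<^sup>+y. ennreal (exp (- (\<Sum>i<M. y i))) \<partial>SeqM l)"
      by (subst nn_integral_cmult[symmetric]) auto
  qed
  also have "\<dots> = (\<integral>\<^sup>+s. ennreal (exp (- s)) \<partial>ExpM l) * ennreal ((l / (l + 1)) ^ M)"
    unfolding Suc.IH by (subst nn_integral_multc) auto
  also have "\<dots> = ennreal ((l / (l + 1)) ^ Suc M)"
    unfolding exp_moment1[OF l] using l by (simp add: ennreal_mult[symmetric] mult.commute)
  finally show ?case .
qed

lemma SS_nonneg:
  assumes l: "0 < l" shows "AE x in SeqM l. \<forall>i. 0 \<le> x i"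
proof -
  have "AE s in ExpM l. 0 \<le> s"
    by (subst AE_density) (auto simp: exponential_density_def)
  then show ?thesis
    by (subst AE_all_countable) (auto intro!: AE_PiM_component prob_space_exponential_density[OF l])
qed

lemma SS_unbounded:
  assumes l: "0 < l" shows "AE x in SeqM l. \<exists>M. h < (\<Sum>i<M. x i)"
proof -
  interpret E: prob_space "ExpM l" using prob_space_exponential_density[OF l] .
  interpret S: sequence_space "ExpM l" ..
  define N where "N = {x \<in> space (SeqM l). \<forall>M. (\<Sum>i<M. x i) \<le> h}"
  have N_sets: "N \<in> sets (SeqM l)" unfolding N_def by measurable
  define r where "r = l / (l + 1)"
  have r: "0 \<le> r" "r < 1" unfolding r_def using l by auto
  have bound: "emeasure (SeqM l) N \<le> ennreal (exp h * r ^ M)" for M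
  proof -
    have "emeasure (SeqM l) N \<le> emeasure (SeqM l) {x \<in> space (SeqM l). (\<Sum>i<M. x i) \<le> h}"
      by (rule emeasure_mono) (auto simp: N_def)
    also have "\<dots> = (\<integral>\<^sup>+x. indicator {x \<in> space (SeqM l). (\<Sum>i<M. x i) \<le> h} x \<partial>SeqM l)"
      by (rule nn_integral_indicator[symmetric]) measurable
    also have "\<dots> \<le> (\<integral>\<^sup>+x. ennreal (exp h) * ennreal (exp (- (\<Sum>i<M. x i))) \<partial>SeqM l)"
    proof (intro nn_integral_mono)
      fix x
      show "indicator {x \<in> space (SeqM l). (\<Sum>i<M. x i) \<le> h} x \<le> ennreal (exp h) * ennreal (exp (- (\<Sum>i<M. x i)))"
      proof (cases "(\<Sum>i<M. x i) \<le> h")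
        case True
        then have "1 \<le> exp h * exp (- (\<Sum>i<M. x i))" by (simp flip: exp_add)
        then show ?thesis by (auto simp: indicator_def ennreal_mult[symmetric])
      qed (auto simp: indicator_def)
    qed
    also have "\<dots> = ennreal (exp h) * ennreal (r ^ M)"
      by (subst nn_integral_cmult) (auto simp: exp_moment[OF l] r_def)
    also have "ennreal (exp h) * ennreal (r ^ M) = ennreal (exp h * r ^ M)" using r by (simp add: ennreal_mult)
    finally show ?thesis .
  qed
  have fin: "emeasure (SeqM l) N = ennreal (measure (SeqM l) N)"
    by (simp add: S.emeasure_eq_measure)
  have le: "measure (SeqM l) N \<le> exp h * r ^ M" for M
  proof -
    have "0 \<le> exp h * r ^ M" using r by simp
    then show ?thesis using bound[of M] unfolding fin by (simp add: ennreal_le_iff)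
  qed
  have "(\<lambda>M. exp h * r ^ M) \<longlonglongrightarrow> exp h * 0"
    by (intro tendsto_mult tendsto_const LIMSEQ_power_zero) (use r in auto)
  then have lim: "(\<lambda>M. exp h * r ^ M) \<longlonglongrightarrow> 0" by simp
  have "measure (SeqM l) N \<le> 0"
    by (rule LIMSEQ_le_const[OF lim]) (use le in auto)
  then have "emeasure (SeqM l) N = 0" unfolding fin by (simp add: measure_nonneg antisym)
  then show ?thesis
    by (intro AE_I[OF _ _ N_sets]) (auto simp: N_def not_less)
qed

definition cnt :: "(nat \<Rightarrow> real) \<Rightarrow> real \<Rightarrow> real \<Rightarrow> nat" where
  "cnt x a b = card {m. a < (\<Sum>i\<le>m. x i) \<and> (\<Sum>i\<le>m. x i) \<le> b}"

lemma cnt_meas[measurable]: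
  assumes [measurable]: "f \<in> N \<rightarrow>\<^sub>M PiM UNIV (\<lambda>_::nat. borel)" "a \<in> borel_measurable N" "b \<in> borel_measurable N"
  shows "(\<lambda>y. cnt (f y) (a y) (b y)) \<in> N \<rightarrow>\<^sub>M count_space UNIV"
  unfolding cnt_def by measurable

lemma prod_if_pow:
  assumes "finite A" shows "(\<Prod>m\<in>A. if P m then c else 1) = c ^ card {m\<in>A. P m}"
  using prod.inter_filter[OF assms, of "\<lambda>_. c" P] by simp

lemma poisson_SS:
  assumes l: "0 < l" and u: "\<And>p. 0 \<le> u p" and w0: "\<And>q. 0 \<le> w q" and w1: "\<And>q. w q \<le> 1"
  shows "(\<integral>\<^sup>+x. ennreal (\<Prod>q<Q. w q ^ cnt x (tg u q) (tg u (Suc q))) \<partial>SeqM l)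
       = ennreal (exp (- l * (\<Sum>q<Q. (1 - w q) * u q)))"
proof -
  interpret E: prob_space "ExpM l" using prob_space_exponential_density[OF l] .
  interpret S: sequence_space "ExpM l" ..
  define \<Phi> where "\<Phi> x = (\<Prod>q<Q. w q ^ cnt x (tg u q) (tg u (Suc q)))" for x
  have sets_eq: "sets (SeqM l) = sets (PiM UNIV (\<lambda>_::nat. borel))"
    by (intro sets_PiM_cong) auto
  have id_meas: "(\<lambda>x. x) \<in> SeqM l \<rightarrow>\<^sub>M PiM UNIV (\<lambda>_::nat. borel)"
    using measurable_ident_sets[OF sets_eq] .
  have \<Phi>_meas: "\<Phi> \<in> borel_measurable (SeqM l)"
    unfolding \<Phi>_def
  proof (rule borel_measurable_prod)
    fix q
    have "(\<lambda>x. cnt x (tg u q) (tg u (Suc q))) \<in> SeqM l \<rightarrow>\<^sub>M count_space UNIV"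
      using cnt_meas[OF id_meas, of "\<lambda>_. tg u q" "\<lambda>_. tg u (Suc q)"] by simp
    then show "(\<lambda>x. w q ^ cnt x (tg u q) (tg u (Suc q))) \<in> borel_measurable (SeqM l)"
      by (rule measurable_compose) simp
  qed
  have conv: "AE x in SeqM l. (\<lambda>M. QQ l u w Q M 0 x) \<longlonglongrightarrow> \<Phi> x"
    using SS_nonneg[OF l] SS_unbounded[OF l, of "tg u Q"]
  proof eventually_elim
    case (elim x)
    then obtain M0 where M0: "tg u Q < (\<Sum>i<M0. x i)" by auto
    have x0: "\<And>i. 0 \<le> x i" using elim by auto
    have "QQ l u w Q M 0 x = \<Phi> x" if M: "M0 \<le> M" for M
    proof -
      have big: "tg u Q < (\<Sum>i\<le>m. x i)" if "M0 \<le> m" for m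
      proof -
        have "(\<Sum>i<M0. x i) \<le> (\<Sum>i\<le>m. x i)" using that x0 by (intro sum_mono2) auto
        then show ?thesis using M0 by simp
      qed
      have "(\<Sum>i<M0. x i) \<le> (\<Sum>i<M. x i)" using M x0 by (intro sum_mono2) auto
      then have H1: "HH l u w Q (0 + (\<Sum>i<M. x i)) = 1"
        using M0 by (intro HH_above[OF u]) auto
      have "(\<Prod>m<M. gw u w Q (0 + (\<Sum>i\<le>m. x i)))
          = (\<Prod>q<Q. \<Prod>m<M. if tg u q < (\<Sum>i\<le>m. x i) \<and> (\<Sum>i\<le>m. x i) \<le> tg u (Suc q) then w q else 1)"
        unfolding gw_def by (simp add: prod.swap[of _ "{..<M}"])
      also have "\<dots> = \<Phi> x"
        unfolding \<Phi>_def
      proof (intro prod.cong refl)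
        fix q assume q: "q \<in> {..<Q}"
        have tq: "tg u (Suc q) \<le> tg u Q" using q tg_mono[where u=u, OF u] by auto
        have lt: "m < M" if "tg u q < (\<Sum>i\<le>m. x i)" "(\<Sum>i\<le>m. x i) \<le> tg u (Suc q)" for m
          using big[of m] tq M that by (cases "M \<le> m") auto
        have "{m\<in>{..<M}. tg u q < (\<Sum>i\<le>m. x i) \<and> (\<Sum>i\<le>m. x i) \<le> tg u (Suc q)}
            = {m. tg u q < (\<Sum>i\<le>m. x i) \<and> (\<Sum>i\<le>m. x i) \<le> tg u (Suc q)}"
          using lt by auto
        then show "(\<Prod>m<M. if tg u q < (\<Sum>i\<le>m. x i) \<and> (\<Sum>i\<le>m. x i) \<le> tg u (Suc q) then w q else 1)
            = w q ^ cnt x (tg u q) (tg u (Suc q))"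
          unfolding prod_if_pow[OF finite_lessThan] cnt_def by simp
      qed
      finally show ?thesis unfolding QQ_def H1 by simp
    qed
    then show ?case by (intro tendsto_eventually eventually_sequentiallyI)
  qed
  have int_QQ: "(\<integral>x. QQ l u w Q M 0 x \<partial>SeqM l) = HH l u w Q 0" for M
  proof -
    have "(\<integral>x. QQ l u w Q M 0 x \<partial>SeqM l) = enn2real (\<integral>\<^sup>+x. ennreal (QQ l u w Q M 0 x) \<partial>SeqM l)"
      by (rule integral_eq_nn_integral) (auto simp: QQ_nonneg[where w=w, OF w0])
    then show ?thesis unfolding QQ_integral[OF l u w0 w1] using less_imp_le[OF HH_pos] by simp
  qed
  have "(\<lambda>M. \<integral>x. QQ l u w Q M 0 x \<partial>SeqM l) \<longlonglongrightarrow> (\<integral>x. \<Phi> x \<partial>SeqM l)"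
  proof (rule integral_dominated_convergence[where w="\<lambda>_. 1"])
    show "\<Phi> \<in> borel_measurable (SeqM l)" by (rule \<Phi>_meas)
    show "(\<lambda>x. QQ l u w Q M 0 x) \<in> borel_measurable (SeqM l)" for M by measurable
    show "integrable (SeqM l) (\<lambda>_. 1::real)" by simp
    show "AE x in SeqM l. (\<lambda>M. QQ l u w Q M 0 x) \<longlonglongrightarrow> \<Phi> x" by (rule conv)
    show "AE x in SeqM l. norm (QQ l u w Q M 0 x) \<le> 1" for M
      using QQ_nonneg[where w=w, OF w0] QQ_le1[where w=w and u=u, OF less_imp_le[OF l] w0 w1 u] by auto
  qed
  then have "(\<integral>x. \<Phi> x \<partial>SeqM l) = HH l u w Q 0"
    unfolding int_QQ using LIMSEQ_unique tendsto_const by blast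
  moreover have "(\<integral>\<^sup>+x. ennreal (\<Phi> x) \<partial>SeqM l) = ennreal (\<integral>x. \<Phi> x \<partial>SeqM l)"
  proof (rule nn_integral_eq_integral)
    have "norm (\<Phi> x) \<le> 1" for x
      unfolding \<Phi>_def using w0 w1 by (auto intro!: prod_le_1 power_le_one simp: abs_prod)
    then show "integrable (SeqM l) \<Phi>"
      by (intro S.integrable_const_bound[where B=1] \<Phi>_meas) auto
    show "AE x in SeqM l. 0 \<le> \<Phi> x" unfolding \<Phi>_def using w0 by (auto intro!: prod_nonneg)
  qed
  ultimately show ?thesis unfolding \<Phi>_def HH_def GG_zero[OF u] by simp
qed

lemma (in prob_space) indep_vars_blocks:
  assumes ind: "indep_vars (\<lambda>_. borel) X I"
    and K: "\<And>j. j \<in> J \<Longrightarrow> range (g j) \<subseteq> I"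
    and disj: "\<And>j j' m m'. j \<in> J \<Longrightarrow> j' \<in> J \<Longrightarrow> g j m = g j' m' \<Longrightarrow> j = j'"
  shows "indep_vars (\<lambda>j. PiM UNIV (\<lambda>_::nat. borel)) (\<lambda>j \<omega>. (\<lambda>m. X (g j m) \<omega>)) J"
proof -
  have df: "disjoint_family_on (\<lambda>j. range (g j)) J"
    unfolding disjoint_family_on_def using disj by blast
  have i1: "indep_vars (\<lambda>j. PiM (range (g j)) (\<lambda>_. borel)) (\<lambda>j \<omega>. restrict (\<lambda>i. X i \<omega>) (range (g j))) J"
    by (rule indep_vars_restrict[OF ind K df])
  have meas: "(\<lambda>v. \<lambda>m. v (g j m)) \<in> PiM (range (g j)) (\<lambda>_. borel) \<rightarrow>\<^sub>M PiM UNIV (\<lambda>_::nat. borel)" for j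
    by (rule measurable_PiM_single') (auto intro!: measurable_component_singleton)
  have i2: "indep_vars (\<lambda>j. PiM UNIV (\<lambda>_::nat. borel))
     (\<lambda>j \<omega>. (\<lambda>v. \<lambda>m. v (g j m)) (restrict (\<lambda>i. X i \<omega>) (range (g j)))) J"
    by (rule indep_vars_compose2[OF i1 meas])
  show ?thesis
    by (rule indep_vars_cong[THEN iffD1, OF refl _ refl i2]) (auto simp: fun_eq_iff)
qed

lemma (in prob_space) indep_vars_reindex:
  assumes ind: "indep_vars (\<lambda>_. borel) X I"
    and K: "\<And>j. j \<in> J \<Longrightarrow> g j \<in> I" and inj: "inj_on g J"
  shows "indep_vars (\<lambda>j. borel) (\<lambda>j. X (g j)) J"
proof -
  have df: "disjoint_family_on (\<lambda>j. {g j}) J"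
    unfolding disjoint_family_on_def using inj by (auto dest: inj_onD)
  have i1: "indep_vars (\<lambda>j. PiM {g j} (\<lambda>_. borel)) (\<lambda>j \<omega>. restrict (\<lambda>i. X i \<omega>) {g j}) J"
    by (rule indep_vars_restrict[OF ind _ df]) (use K in auto)
  have meas: "(\<lambda>v. v (g j)) \<in> PiM {g j} (\<lambda>_. borel) \<rightarrow>\<^sub>M borel" for j
    by (rule measurable_component_singleton) auto
  have i2: "indep_vars (\<lambda>j. borel) (\<lambda>j \<omega>. (\<lambda>v. v (g j)) (restrict (\<lambda>i. X i \<omega>) {g j})) J"
    by (rule indep_vars_compose2[OF i1 meas])
  show ?thesis
    by (rule indep_vars_cong[THEN iffD1, OF refl _ refl i2]) (auto simp: fun_eq_iff)
qed

lemma Phi_meas[measurable]: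
  fixes w :: "nat \<Rightarrow> real"
  assumes [measurable]: "f \<in> N \<rightarrow>\<^sub>M PiM UNIV (\<lambda>_::nat. borel)"
  shows "(\<lambda>y. \<Prod>q<Q. w q ^ cnt (f y) (tg u q) (tg u (Suc q))) \<in> borel_measurable N"
proof (rule borel_measurable_prod)
  fix q
  have "(\<lambda>y. cnt (f y) (tg u q) (tg u (Suc q))) \<in> N \<rightarrow>\<^sub>M count_space UNIV" by measurable
  then show "(\<lambda>y. w q ^ cnt (f y) (tg u q) (tg u (Suc q))) \<in> borel_measurable N"
    by (rule measurable_compose) simp
qed

lemma (in prob_space) class_seq_distr:
  assumes ind: "indep_vars (\<lambda>_. borel) X I" and K: "\<And>m. g m \<in> I" and inj: "inj g"
    and dist: "\<And>m. distributed M lborel (X (g m)) (exponential_density l)"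
  shows "distr M (PiM UNIV (\<lambda>_::nat. borel)) (\<lambda>\<omega> m. X (g m) \<omega>) = SeqM l"
proof -
  have rv: "random_variable borel (X (g m))" for m
    using dist[of m] by (auto simp: distributed_def)
  have i: "indep_vars (\<lambda>j. borel) (\<lambda>j. X (g j)) UNIV"
    by (rule indep_vars_reindex[OF ind]) (use K inj in auto)
  have "distr M (PiM UNIV (\<lambda>_::nat. borel)) (\<lambda>\<omega>. \<lambda>m\<in>UNIV. X (g m) \<omega>) = PiM UNIV (\<lambda>m. distr M borel (X (g m)))"
    using indep_vars_iff_distr_eq_PiM[where I=UNIV and M'="\<lambda>_. borel" and X="\<lambda>m. X (g m)"] i rv by simp
  moreover have "distr M borel (X (g m)) = ExpM l" for m
  proof -
    have "distr M borel (X (g m)) = distr M lborel (X (g m))" by (rule distr_cong) auto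
    then show ?thesis using dist[of m] by (simp add: distributed_def)
  qed
  ultimately show ?thesis by (simp add: restrict_UNIV)
qed

lemma (in prob_space) class_poisson:
  assumes ind: "indep_vars (\<lambda>_. borel) X I" and K: "\<And>m. g m \<in> I" and inj: "inj g"
    and dist: "\<And>m. distributed M lborel (X (g m)) (exponential_density l)"
    and l: "0 < l" and u: "\<And>p. 0 \<le> u p" and w0: "\<And>q. 0 \<le> w q" and w1: "\<And>q. w q \<le> 1"
  shows "(\<integral>\<^sup>+\<omega>. ennreal (\<Prod>q<Q. w q ^ cnt (\<lambda>m. X (g m) \<omega>) (tg u q) (tg u (Suc q))) \<partial>M)
       = ennreal (exp (- l * (\<Sum>q<Q. (1 - w q) * u q)))"
proof -
  have rv: "(\<lambda>\<omega> m. X (g m) \<omega>) \<in> M \<rightarrow>\<^sub>M PiM UNIV (\<lambda>_::nat. borel)"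
    using dist by (intro measurable_PiM_single') (auto simp: distributed_def)
  have "(\<integral>\<^sup>+\<omega>. ennreal (\<Prod>q<Q. w q ^ cnt (\<lambda>m. X (g m) \<omega>) (tg u q) (tg u (Suc q))) \<partial>M)
     = (\<integral>\<^sup>+x. ennreal (\<Prod>q<Q. w q ^ cnt x (tg u q) (tg u (Suc q))) \<partial>distr M (PiM UNIV (\<lambda>_::nat. borel)) (\<lambda>\<omega> m. X (g m) \<omega>))"
    by (subst nn_integral_distr[OF rv]) (auto intro!: measurable_compose[OF _ measurable_ennreal])
  also have "\<dots> = (\<integral>\<^sup>+x. ennreal (\<Prod>q<Q. w q ^ cnt x (tg u q) (tg u (Suc q))) \<partial>SeqM l)"
    unfolding class_seq_distr[OF ind K inj dist] ..
  also have "\<dots> = ennreal (exp (- l * (\<Sum>q<Q. (1 - w q) * u q)))"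
    by (rule poisson_SS[OF l u w0 w1])
  finally show ?thesis .
qed

lemma (in prob_space) multi_poisson:
  fixes w :: "nat \<Rightarrow> nat \<Rightarrow> real" and g :: "nat \<Rightarrow> nat \<Rightarrow> 'i"
  assumes ind: "indep_vars (\<lambda>_. borel) X I" and fin: "finite Cl"
    and K: "\<And>i m. i \<in> Cl \<Longrightarrow> g i m \<in> I" and inj: "\<And>i. i \<in> Cl \<Longrightarrow> inj (g i)"
    and disj: "\<And>i i' m m'. i \<in> Cl \<Longrightarrow> i' \<in> Cl \<Longrightarrow> g i m = g i' m' \<Longrightarrow> i = i'"
    and dist: "\<And>i m. i \<in> Cl \<Longrightarrow> distributed M lborel (X (g i m)) (exponential_density (lam i))"
    and lam: "\<And>i. i \<in> Cl \<Longrightarrow> 0 < lam i" and u: "\<And>p. 0 \<le> u p"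
    and w0: "\<And>i q. 0 \<le> w i q" and w1: "\<And>i q. w i q \<le> 1"
  shows "(\<integral>\<^sup>+\<omega>. ennreal (\<Prod>i\<in>Cl. \<Prod>q<Q. w i q ^ cnt (\<lambda>m. X (g i m) \<omega>) (tg u q) (tg u (Suc q))) \<partial>M)
       = ennreal (\<Prod>i\<in>Cl. exp (- lam i * (\<Sum>q<Q. (1 - w i q) * u q)))"
proof -
  have ib: "indep_vars (\<lambda>i. PiM UNIV (\<lambda>_::nat. borel)) (\<lambda>i \<omega> m. X (g i m) \<omega>) Cl"
    by (rule indep_vars_blocks[OF ind]) (use K disj in auto)
  have ie: "indep_vars (\<lambda>_. borel) (\<lambda>i \<omega>. (\<lambda>x. ennreal (\<Prod>q<Q. w i q ^ cnt x (tg u q) (tg u (Suc q)))) (\<lambda>m. X (g i m) \<omega>)) Cl"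
  proof (rule indep_vars_compose2[OF ib])
    fix i
    have "(\<lambda>x. \<Prod>q<Q. w i q ^ cnt x (tg u q) (tg u (Suc q))) \<in> borel_measurable (PiM UNIV (\<lambda>_::nat. borel))"
      by (rule Phi_meas[OF measurable_ident_sets]) simp
    then show "(\<lambda>x. ennreal (\<Prod>q<Q. w i q ^ cnt x (tg u q) (tg u (Suc q)))) \<in> borel_measurable (PiM UNIV (\<lambda>_::nat. borel))"
      by (rule measurable_compose[OF _ measurable_ennreal])
  qed
  have nn: "0 \<le> (\<Prod>q<Q. w i q ^ cnt x (tg u q) (tg u (Suc q)))" for i x
    using w0 by (intro prod_nonneg) auto
  have "(\<integral>\<^sup>+\<omega>. ennreal (\<Prod>i\<in>Cl. \<Prod>q<Q. w i q ^ cnt (\<lambda>m. X (g i m) \<omega>) (tg u q) (tg u (Suc q))) \<partial>M)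
     = (\<integral>\<^sup>+\<omega>. (\<Prod>i\<in>Cl. ennreal (\<Prod>q<Q. w i q ^ cnt (\<lambda>m. X (g i m) \<omega>) (tg u q) (tg u (Suc q)))) \<partial>M)"
    by (intro nn_integral_cong) (simp add: prod_ennreal nn)
  also have "\<dots> = (\<Prod>i\<in>Cl. \<integral>\<^sup>+\<omega>. ennreal (\<Prod>q<Q. w i q ^ cnt (\<lambda>m. X (g i m) \<omega>) (tg u q) (tg u (Suc q))) \<partial>M)"
    by (rule indep_vars_nn_integral[OF fin ie]) simp
  also have "\<dots> = (\<Prod>i\<in>Cl. ennreal (exp (- lam i * (\<Sum>q<Q. (1 - w i q) * u q))))"
  proof (rule prod.cong[OF refl])
    fix i assume i: "i \<in> Cl"
    show "(\<integral>\<^sup>+\<omega>. ennreal (\<Prod>q<Q. w i q ^ cnt (\<lambda>m. X (g i m) \<omega>) (tg u q) (tg u (Suc q))) \<partial>M)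
       = ennreal (exp (- lam i * (\<Sum>q<Q. (1 - w i q) * u q)))"
      by (rule class_poisson[OF ind _ inj[OF i] dist[OF i] lam[OF i] u w0 w1]) (use K i in auto)
  qed
  also have "\<dots> = ennreal (\<Prod>i\<in>Cl. exp (- lam i * (\<Sum>q<Q. (1 - w i q) * u q)))"
    by (simp add: prod_ennreal)
  finally show ?thesis .
qed

definition good :: "(nat \<Rightarrow> real) \<Rightarrow> bool" where
  "good x \<longleftrightarrow> (\<forall>i. 0 \<le> x i) \<and> (\<forall>h::nat. \<exists>M. real h < (\<Sum>i<M. x i))"

lemma good_meas[measurable]:
  assumes [measurable]: "f \<in> N \<rightarrow>\<^sub>M PiM UNIV (\<lambda>_::nat. borel)"
  shows "Measurable.pred N (\<lambda>y. good (f y))"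
  unfolding good_def by measurable

lemma good_finite:
  assumes g: "good x" shows "finite {m. a < (\<Sum>i\<le>m. x i) \<and> (\<Sum>i\<le>m. x i) \<le> b}"
proof -
  obtain M where M: "real (nat \<lceil>b\<rceil>) < (\<Sum>i<M. x i)" using g unfolding good_def by blast
  have "b \<le> real (nat \<lceil>b\<rceil>)" by linarith
  have "m < M" if "(\<Sum>i\<le>m. x i) \<le> b" for m
  proof (rule ccontr)
    assume "\<not> m < M"
    then have "(\<Sum>i<M. x i) \<le> (\<Sum>i\<le>m. x i)" using g unfolding good_def by (intro sum_mono2) auto
    then show False using that M \<open>b \<le> _\<close> by linarith
  qed
  then have "{m. a < (\<Sum>i\<le>m. x i) \<and> (\<Sum>i\<le>m. x i) \<le> b} \<subseteq> {..<M}" by auto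
  then show ?thesis by (rule finite_subset) simp
qed

lemma cnt_split:
  assumes g: "good x" and ab: "a \<le> b" and bc: "b \<le> c"
  shows "cnt x a c = cnt x a b + cnt x b c"
proof -
  have "{m. a < (\<Sum>i\<le>m. x i) \<and> (\<Sum>i\<le>m. x i) \<le> c} =
     {m. a < (\<Sum>i\<le>m. x i) \<and> (\<Sum>i\<le>m. x i) \<le> b} \<union> {m. b < (\<Sum>i\<le>m. x i) \<and> (\<Sum>i\<le>m. x i) \<le> c}"
    using ab bc by auto
  then show ?thesis unfolding cnt_def
    by (simp add: card_Un_disjoint[OF good_finite[OF g] good_finite[OF g]] disjoint_iff)
qed

lemma cnt_grid:
  assumes g: "good x" and u: "\<And>p. 0 \<le> u p"
  shows "cnt x 0 (tg u N) = (\<Sum>q<N. cnt x (tg u q) (tg u (Suc q)))"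
proof (induction N)
  case 0
  have e: "{m. 0 < (\<Sum>i\<le>m. x i) \<and> (\<Sum>i\<le>m. x i) \<le> 0} = {}" by auto
  have t: "tg u 0 = 0" by (simp add: tg_def)
  show ?case unfolding cnt_def t e by simp
next
  case (Suc N)
  have "0 \<le> tg u N" unfolding tg_def using u by (intro sum_nonneg) auto
  moreover have "tg u N \<le> tg u (Suc N)" using tg_mono[where u=u, OF u] by simp
  ultimately show ?case using Suc.IH cnt_split[OF g, of 0 "tg u N" "tg u (Suc N)"] by simp
qed

definition uu :: "(nat \<Rightarrow> real) \<Rightarrow> (nat \<Rightarrow> real) \<Rightarrow> nat \<Rightarrow> real" where
  "uu c d p = (if even p then c (p div 2) else d (p div 2))"

lemma tg_uu_even: "tg (uu c d) (2 * l) = (\<Sum>p<l. c p + d p)"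
proof (induction l)
  case 0 then show ?case by (simp add: tg_def)
next
  case (Suc l)
  have "tg (uu c d) (2 * Suc l) = tg (uu c d) (2 * l) + uu c d (2 * l) + uu c d (Suc (2 * l))"
    by (simp add: tg_def)
  also have "\<dots> = (\<Sum>p<Suc l. c p + d p)" unfolding Suc.IH by (simp add: uu_def)
  finally show ?case .
qed

lemma tg_Suc: "tg u (Suc q) = tg u q + u q" by (simp add: tg_def)

lemma tg_uu_odd: "tg (uu c d) (Suc (2 * l)) = (\<Sum>p<l. c p + d p) + c l"
  unfolding tg_Suc tg_uu_even by (simp add: uu_def)

lemma tg_uu_odd2: "tg (uu c d) (Suc (Suc (2 * l))) = (\<Sum>p<l. c p + d p) + c l + d l"
  unfolding tg_Suc[of _ "Suc _"] tg_uu_odd by (simp add: uu_def)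

lemma round_start_const: "round_start (\<lambda>l _. c l) (\<lambda>l _. d l) j \<omega> = (\<Sum>p<j. c p + d p)"
  by (simp add: round_start_def)

lemma arr_count_cnt: "arr_count A i a b \<omega> = cnt (\<lambda>m. A i m \<omega>) a b"
  by (simp add: arr_count_def cnt_def arr_time_def)

lemma resume_fails_grid:
  "resume_fails k A (\<lambda>l _. c l) (\<lambda>l _. d l) a \<omega> \<longleftrightarrow>
    (\<exists>i\<in>{1..<k}. 0 < cnt (\<lambda>m. A i m \<omega>) (tg (uu c d) (Suc (2 * a))) (tg (uu c d) (Suc (Suc (2 * a)))))"
  unfolding resume_fails_def round_start_const arr_count_cnt tg_uu_odd tg_uu_odd2 ..

definition Pw :: "nat \<Rightarrow> (nat \<Rightarrow> real) \<Rightarrow> nat set \<Rightarrow> nat \<Rightarrow> nat \<Rightarrow> real" where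
  "Pw k z E i q = (if odd q \<and> q div 2 \<in> E \<and> i < k then 0 else z i)"

definition PiEw :: "nat \<Rightarrow> nat \<Rightarrow> (nat \<Rightarrow> nat \<Rightarrow> 'a \<Rightarrow> real) \<Rightarrow> (nat \<Rightarrow> real) \<Rightarrow> (nat \<Rightarrow> real) \<Rightarrow> (nat \<Rightarrow> real)
    \<Rightarrow> nat \<Rightarrow> nat set \<Rightarrow> 'a \<Rightarrow> real" where
  "PiEw n k A c d z j E \<omega> = (\<Prod>i\<in>{1..n}. \<Prod>q<2 * Suc j. Pw k z E i q ^ cnt (\<lambda>m. A i m \<omega>) (tg (uu c d) q) (tg (uu c d) (Suc q)))"

definition Fl :: "nat \<Rightarrow> (nat \<Rightarrow> nat \<Rightarrow> 'a \<Rightarrow> real) \<Rightarrow> (nat \<Rightarrow> real) \<Rightarrow> (nat \<Rightarrow> real) \<Rightarrow> nat \<Rightarrow> 'a \<Rightarrow> real" where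
  "Fl k A c d l \<omega> = (if resume_fails k A (\<lambda>l _. c l) (\<lambda>l _. d l) l \<omega> then 1 else 0)"

lemma prod_zero_pow: "finite S \<Longrightarrow> (\<Prod>i\<in>S. (0::real) ^ f i) = (if \<forall>i\<in>S. f i = 0 then 1 else 0)"
  by (induction S rule: finite_induct) auto

lemma PiEw_insert:
  assumes a: "a \<notin> E" "a \<le> j" and kn: "k \<le> Suc n"
  shows "PiEw n k A c d z j (insert a E) \<omega> = PiEw n k A c d z j E \<omega> * (1 - Fl k A c d a \<omega>)"
proof -
  define N where "N i q = cnt (\<lambda>m. A i m \<omega>) (tg (uu c d) q) (tg (uu c d) (Suc q))" for i q
  define \<delta> where "\<delta> i q = (if q = Suc (2 * a) \<and> i < k then 0 else (1::real))" for i q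
  have pw: "Pw k z (insert a E) i q = Pw k z E i q * \<delta> i q" for i q
    using a(1) by (auto simp: Pw_def \<delta>_def elim!: oddE)
  have "PiEw n k A c d z j (insert a E) \<omega> =
      (\<Prod>i\<in>{1..n}. \<Prod>q<2 * Suc j. Pw k z E i q ^ N i q) * (\<Prod>i\<in>{1..n}. \<Prod>q<2 * Suc j. \<delta> i q ^ N i q)"
    unfolding PiEw_def pw power_mult_distrib prod.distrib N_def ..
  moreover have "(\<Prod>q<2 * Suc j. \<delta> i q ^ N i q) = (if i < k then 0 ^ N i (Suc (2 * a)) else 1)" for i
  proof -
    have mem: "Suc (2 * a) \<in> {..<2 * Suc j}" using a by auto
    have "(\<Prod>q<2 * Suc j. \<delta> i q ^ N i q) = \<delta> i (Suc (2 * a)) ^ N i (Suc (2 * a)) * (\<Prod>q\<in>{..<2 * Suc j} - {Suc (2 * a)}. \<delta> i q ^ N i q)"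
      by (rule prod.remove[OF _ mem]) simp
    also have "(\<Prod>q\<in>{..<2 * Suc j} - {Suc (2 * a)}. \<delta> i q ^ N i q) = 1"
      by (intro prod.neutral) (auto simp: \<delta>_def)
    finally show ?thesis by (simp add: \<delta>_def)
  qed
  then have "(\<Prod>i\<in>{1..n}. \<Prod>q<2 * Suc j. \<delta> i q ^ N i q) = (\<Prod>i\<in>{1..n}. if i < k then 0 ^ N i (Suc (2 * a)) else 1)"
    by simp
  also have "\<dots> = (\<Prod>i\<in>{1..<k}. (0::real) ^ N i (Suc (2 * a)))"
  proof -
    have "(\<Prod>i\<in>{1..n}. if i < k then (0::real) ^ N i (Suc (2 * a)) else 1) = (\<Prod>i\<in>{i\<in>{1..n}. i < k}. 0 ^ N i (Suc (2 * a)))"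
      by (rule prod.inter_filter[symmetric]) simp
    also have "{i\<in>{1..n}. i < k} = {1..<k}" using kn by auto
    finally show ?thesis .
  qed
  also have "\<dots> = 1 - Fl k A c d a \<omega>"
    unfolding prod_zero_pow[OF finite_atLeastLessThan] Fl_def resume_fails_grid N_def by auto
  finally show ?thesis by (simp add: PiEw_def N_def)
qed

lemma sum_pairs: "(\<Sum>q<2 * N. f q) = (\<Sum>l<N. f (2 * l) + f (Suc (2 * l)))"
  for f :: "nat \<Rightarrow> real"
  by (induction N) (simp_all add: add.assoc)

definition VC :: "nat \<Rightarrow> (nat \<Rightarrow> real) \<Rightarrow> (nat \<Rightarrow> real) \<Rightarrow> real \<Rightarrow> real \<Rightarrow> nat set \<Rightarrow> nat set \<Rightarrow> real" where
  "VC j c d LA LB E F = (\<Prod>l<Suc j. exp (- LA * c l) *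
     (if l \<in> E then exp (- LB * d l) else if l \<in> F then exp (- LA * d l) - exp (- LB * d l) else exp (- LA * d l)))"

lemma kappa_split:
  fixes k n :: nat and lam z :: "nat \<Rightarrow> real"
  assumes "1 \<le> k" "k \<le> n"
  shows "(\<Sum>i\<in>{1..n}. lam i * (1 - (if i < k then 0 else z i))) =
    (\<Sum>i\<in>{1..<k}. lam i) + (\<Sum>i\<in>{k..n}. lam i * (1 - z i))"
proof -
  define f where "f i = lam i * (1 - (if i < k then 0 else z i))" for i
  have "{1..n} = {1..<k} \<union> {k..n}" using assms by auto
  moreover have "sum f ({1..<k} \<union> {k..n}) = sum f {1..<k} + sum f {k..n}"
    by (rule sum.union_disjoint) auto
  ultimately have "(\<Sum>i\<in>{1..n}. lam i * (1 - (if i < k then 0 else z i))) =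
     (\<Sum>i\<in>{1..<k}. lam i * (1 - (if i < k then 0 else z i))) + (\<Sum>i\<in>{k..n}. lam i * (1 - (if i < k then 0 else z i)))"
    unfolding f_def by simp
  also have "(\<Sum>i\<in>{1..<k}. lam i * (1 - (if i < k then 0 else z i))) = (\<Sum>i\<in>{1..<k}. lam i)"
    by (intro sum.cong) auto
  also have "(\<Sum>i\<in>{k..n}. lam i * (1 - (if i < k then 0 else z i))) = (\<Sum>i\<in>{k..n}. lam i * (1 - z i))"
    by (intro sum.cong) auto
  finally show ?thesis .
qed

lemma base_algebra:
  assumes k: "1 \<le> k" "k \<le> n"
  shows "(\<Prod>i\<in>{1..n}. exp (- lam i * (\<Sum>q<2 * Suc j. (1 - Pw k z E i q) * uu c d q))) =
    VC j c d (\<Sum>i\<in>{1..n}. lam i * (1 - z i)) ((\<Sum>i\<in>{1..<k}. lam i) + (\<Sum>i\<in>{k..n}. lam i * (1 - z i))) E {}"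
proof -
  define LA where "LA = (\<Sum>i\<in>{1..n}. lam i * (1 - z i))"
  define LB where "LB = (\<Sum>i\<in>{1..<k}. lam i) + (\<Sum>i\<in>{k..n}. lam i * (1 - z i))"
  define \<kappa> where "\<kappa> q = (\<Sum>i\<in>{1..n}. lam i * (1 - Pw k z E i q))" for q
  have k0: "\<kappa> (2 * l) = LA" for l unfolding \<kappa>_def LA_def Pw_def by simp
  have k1: "\<kappa> (Suc (2 * l)) = (if l \<in> E then LB else LA)" for l
  proof (cases "l \<in> E")
    case True
    have "\<kappa> (Suc (2 * l)) = (\<Sum>i\<in>{1..n}. lam i * (1 - (if i < k then 0 else z i)))"
      unfolding \<kappa>_def Pw_def using True by (intro sum.cong) auto
    then show ?thesis using True kappa_split[OF k] by (simp add: LB_def)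
  next
    case False
    then show ?thesis unfolding \<kappa>_def LA_def Pw_def by simp
  qed
  have "(\<Sum>i\<in>{1..n}. lam i * (\<Sum>q<2 * Suc j. (1 - Pw k z E i q) * uu c d q)) = (\<Sum>q<2 * Suc j. uu c d q * \<kappa> q)"
    unfolding \<kappa>_def sum_distrib_left sum_distrib_right by (subst sum.swap) (simp add: algebra_simps)
  also have "\<dots> = (\<Sum>l<Suc j. c l * LA + d l * (if l \<in> E then LB else LA))"
    unfolding sum_pairs k0 k1 by (simp add: uu_def)
  finally have S: "(\<Sum>i\<in>{1..n}. lam i * (\<Sum>q<2 * Suc j. (1 - Pw k z E i q) * uu c d q)) =
     (\<Sum>l<Suc j. c l * LA + d l * (if l \<in> E then LB else LA))" .
  have "(\<Prod>i\<in>{1..n}. exp (- lam i * (\<Sum>q<2 * Suc j. (1 - Pw k z E i q) * uu c d q)))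
     = exp (- (\<Sum>i\<in>{1..n}. lam i * (\<Sum>q<2 * Suc j. (1 - Pw k z E i q) * uu c d q)))"
    by (simp add: exp_sum[symmetric] sum_negf[symmetric])
  also have "\<dots> = (\<Prod>l<Suc j. exp (- (c l * LA + d l * (if l \<in> E then LB else LA))))"
    unfolding S sum_negf[symmetric] by (rule exp_sum) simp
  also have "\<dots> = VC j c d LA LB E {}"
    unfolding VC_def by (intro prod.cong refl) (simp add: exp_add[symmetric] algebra_simps)
  finally show ?thesis unfolding LA_def LB_def .
qed

lemma VC_insert:
  assumes "a \<notin> E" "a \<notin> F" "a < Suc j"
  shows "VC j c d LA LB E (insert a F) = VC j c d LA LB E F - VC j c d LA LB (insert a E) F"
proof -
  define g where "g E F l = exp (- LA * c l) *
     (if l \<in> E then exp (- LB * d l) else if l \<in> F then exp (- LA * d l) - exp (- LB * d l) else exp (- LA * d l))" for E F l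
  have mem: "a \<in> {..<Suc j}" using assms by simp
  have split: "VC j c d LA LB E F = g E F a * (\<Prod>l\<in>{..<Suc j} - {a}. g E F l)" for E F
    unfolding VC_def g_def[symmetric] by (rule prod.remove[OF _ mem]) simp
  have rest: "(\<Prod>l\<in>{..<Suc j} - {a}. g E' F' l) = (\<Prod>l\<in>{..<Suc j} - {a}. g E F l)"
    if "E' - {a} = E - {a}" "F' - {a} = F - {a}" for E' F'
  proof (intro prod.cong refl)
    fix l assume "l \<in> {..<Suc j} - {a}"
    then have "l \<in> E' \<longleftrightarrow> l \<in> E" "l \<in> F' \<longleftrightarrow> l \<in> F" using that by blast+
    then show "g E' F' l = g E F l" unfolding g_def by simp
  qed
  have r1: "(\<Prod>l\<in>{..<Suc j} - {a}. g E (insert a F) l) = (\<Prod>l\<in>{..<Suc j} - {a}. g E F l)"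
    by (rule rest) auto
  have r2: "(\<Prod>l\<in>{..<Suc j} - {a}. g (insert a E) F l) = (\<Prod>l\<in>{..<Suc j} - {a}. g E F l)"
    by (rule rest) auto
  show ?thesis unfolding split[of E "insert a F"] split[of E F] split[of "insert a E" F] r1 r2
    using assms by (simp add: g_def algebra_simps)
qed

lemma PiEw_meas[measurable]:
  assumes [measurable]: "\<And>i m. A i m \<in> borel_measurable N"
  shows "(\<lambda>\<omega>. PiEw n k A c d z j E \<omega>) \<in> borel_measurable N"
proof -
  have f: "(\<lambda>\<omega> m. A i m \<omega>) \<in> N \<rightarrow>\<^sub>M PiM UNIV (\<lambda>_::nat. borel)" for i
    by (rule measurable_PiM_single') auto
  show ?thesis
    unfolding PiEw_def
  proof (intro borel_measurable_prod)
    fix i q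
    show "(\<lambda>\<omega>. Pw k z E i q ^ cnt (\<lambda>m. A i m \<omega>) (tg (uu c d) q) (tg (uu c d) (Suc q))) \<in> borel_measurable N"
      by (rule measurable_compose[OF cnt_meas[OF f]]) auto
  qed
qed

lemma Fl_meas[measurable]:
  assumes [measurable]: "\<And>i m. A i m \<in> borel_measurable N"
  shows "(\<lambda>\<omega>. Fl k A c d l \<omega>) \<in> borel_measurable N"
proof -
  have f: "(\<lambda>\<omega> m. A i m \<omega>) \<in> N \<rightarrow>\<^sub>M PiM UNIV (\<lambda>_::nat. borel)" for i
    by (rule measurable_PiM_single') auto
  have [measurable]: "(\<lambda>\<omega>. cnt (\<lambda>m. A i m \<omega>) a b) \<in> N \<rightarrow>\<^sub>M count_space UNIV" for i a b
    by (rule cnt_meas[OF f]) auto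
  show ?thesis unfolding Fl_def resume_fails_grid by measurable
qed

lemma PiEw_bound:
  assumes z: "\<And>i. i \<in> {1..n} \<Longrightarrow> 0 \<le> z i \<and> z i \<le> 1"
  shows "0 \<le> PiEw n k A c d z j E \<omega>" "PiEw n k A c d z j E \<omega> \<le> 1"
proof -
  have p: "0 \<le> Pw k z E i q" "Pw k z E i q \<le> 1" if "i \<in> {1..n}" for i q
    using z[OF that] by (auto simp: Pw_def)
  show "0 \<le> PiEw n k A c d z j E \<omega>" unfolding PiEw_def
  proof (rule prod_nonneg)
    fix i assume i: "i \<in> {1..n}"
    show "0 \<le> (\<Prod>q<2 * Suc j. Pw k z E i q ^ cnt (\<lambda>m. A i m \<omega>) (tg (uu c d) q) (tg (uu c d) (Suc q)))"
      by (intro prod_nonneg zero_le_power p(1)[OF i])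
  qed
  show "PiEw n k A c d z j E \<omega> \<le> 1" unfolding PiEw_def
  proof (rule prod_le_1)
    fix i assume i: "i \<in> {1..n}"
    have "0 \<le> (\<Prod>q<2 * Suc j. Pw k z E i q ^ cnt (\<lambda>m. A i m \<omega>) (tg (uu c d) q) (tg (uu c d) (Suc q)))"
      by (intro prod_nonneg zero_le_power p(1)[OF i])
    moreover have "(\<Prod>q<2 * Suc j. Pw k z E i q ^ cnt (\<lambda>m. A i m \<omega>) (tg (uu c d) q) (tg (uu c d) (Suc q))) \<le> 1"
      by (intro prod_le_1 conjI zero_le_power power_le_one p[OF i])
    ultimately show "0 \<le> (\<Prod>q<2 * Suc j. Pw k z E i q ^ cnt (\<lambda>m. A i m \<omega>) (tg (uu c d) q) (tg (uu c d) (Suc q))) \<and>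
        (\<Prod>q<2 * Suc j. Pw k z E i q ^ cnt (\<lambda>m. A i m \<omega>) (tg (uu c d) q) (tg (uu c d) (Suc q))) \<le> 1" ..
  qed
qed

lemma Fl_bound: "0 \<le> Fl k A c d l \<omega>" "Fl k A c d l \<omega> \<le> 1"
  by (auto simp: Fl_def)

lemma (in prob_space) V_lemma:
  fixes A :: "nat \<Rightarrow> nat \<Rightarrow> 'a \<Rightarrow> real" and c d z lam :: "nat \<Rightarrow> real"
  assumes Am: "\<And>i m. A i m \<in> borel_measurable M"
    and mp: "\<And>(u::nat\<Rightarrow>real) (w::nat\<Rightarrow>nat\<Rightarrow>real) Q. (\<And>p. 0 \<le> u p) \<Longrightarrow> (\<And>i q. i \<in> {1..n} \<Longrightarrow> 0 \<le> w i q)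
        \<Longrightarrow> (\<And>i q. i \<in> {1..n} \<Longrightarrow> w i q \<le> 1) \<Longrightarrow>
       (\<integral>\<^sup>+\<omega>. ennreal (\<Prod>i\<in>{1..n}. \<Prod>q<Q. w i q ^ cnt (\<lambda>m. A i m \<omega>) (tg u q) (tg u (Suc q))) \<partial>M)
         = ennreal (\<Prod>i\<in>{1..n}. exp (- lam i * (\<Sum>q<Q. (1 - w i q) * u q)))"
    and k: "1 \<le> k" "k \<le> n" and z: "\<And>i. i \<in> {1..n} \<Longrightarrow> 0 \<le> z i \<and> z i \<le> 1"
    and c: "\<And>l. 0 \<le> c l" and d: "\<And>l. 0 \<le> d l"
  shows "F \<subseteq> {..j} \<Longrightarrow> E \<subseteq> {..j} \<Longrightarrow> E \<inter> F = {} \<Longrightarrow>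
    (\<integral>\<omega>. PiEw n k A c d z j E \<omega> * (\<Prod>l\<in>F. Fl k A c d l \<omega>) \<partial>M) =
    VC j c d (\<Sum>i\<in>{1..n}. lam i * (1 - z i)) ((\<Sum>i\<in>{1..<k}. lam i) + (\<Sum>i\<in>{k..n}. lam i * (1 - z i))) E F"
proof (induction F arbitrary: E rule: infinite_finite_induct)
  case (infinite F)
  then show ?case using finite_subset[OF infinite(2)] by auto
next
  case (empty E)
  have u: "0 \<le> uu c d p" for p using c d by (simp add: uu_def)
  have pb0: "0 \<le> PiEw n k A c d z j E \<omega>" for \<omega> by (rule PiEw_bound(1)) (rule z)
  have vc0: "0 \<le> VC j c d LA LB E {}" for LA LB unfolding VC_def by (rule prod_nonneg) simp
  have "(\<integral>\<omega>. PiEw n k A c d z j E \<omega> \<partial>M) = enn2real (\<integral>\<^sup>+\<omega>. ennreal (PiEw n k A c d z j E \<omega>) \<partial>M)"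
    by (rule integral_eq_nn_integral) (auto intro!: AE_I2 PiEw_meas Am simp: pb0)
  also have "(\<integral>\<^sup>+\<omega>. ennreal (PiEw n k A c d z j E \<omega>) \<partial>M) =
      ennreal (\<Prod>i\<in>{1..n}. exp (- lam i * (\<Sum>q<2 * Suc j. (1 - Pw k z E i q) * uu c d q)))"
    unfolding PiEw_def by (rule mp) (use u z in \<open>auto simp: Pw_def\<close>)
  finally show ?case using base_algebra[OF k] vc0 by simp
next
  case (insert a F E)
  have a: "a \<notin> E" "a \<le> j" using insert by auto
  have kn: "k \<le> Suc n" using k by simp
  note [measurable] = Am
  have int: "integrable M (\<lambda>\<omega>. PiEw n k A c d z j E' \<omega> * (\<Prod>l\<in>F. Fl k A c d l \<omega>))" for E'
  proof (rule integrable_const_bound[where B=1])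
    have "norm (PiEw n k A c d z j E' \<omega> * (\<Prod>l\<in>F. Fl k A c d l \<omega>)) \<le> 1" for \<omega>
    proof -
      have p: "0 \<le> PiEw n k A c d z j E' \<omega>" "PiEw n k A c d z j E' \<omega> \<le> 1"
        by (rule PiEw_bound(1), rule z, assumption) (rule PiEw_bound(2), rule z, assumption)
      have f: "0 \<le> (\<Prod>l\<in>F. Fl k A c d l \<omega>)" "(\<Prod>l\<in>F. Fl k A c d l \<omega>) \<le> 1"
        by (auto intro!: prod_nonneg prod_le_1 simp: Fl_bound)
      show ?thesis using p f by (simp add: abs_mult mult_le_one)
    qed
    then show "AE \<omega> in M. norm (PiEw n k A c d z j E' \<omega> * (\<Prod>l\<in>F. Fl k A c d l \<omega>)) \<le> 1"
      by (intro AE_I2) auto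
  qed measurable
  have eq: "PiEw n k A c d z j E \<omega> * (\<Prod>l\<in>insert a F. Fl k A c d l \<omega>) =
      PiEw n k A c d z j E \<omega> * (\<Prod>l\<in>F. Fl k A c d l \<omega>) - PiEw n k A c d z j (insert a E) \<omega> * (\<Prod>l\<in>F. Fl k A c d l \<omega>)" for \<omega>
    unfolding PiEw_insert[OF a kn] prod.insert[OF insert(1,2)] by (simp add: algebra_simps)
  have "(\<integral>\<omega>. PiEw n k A c d z j E \<omega> * (\<Prod>l\<in>insert a F. Fl k A c d l \<omega>) \<partial>M) =
      (\<integral>\<omega>. PiEw n k A c d z j E \<omega> * (\<Prod>l\<in>F. Fl k A c d l \<omega>) \<partial>M) -
      (\<integral>\<omega>. PiEw n k A c d z j (insert a E) \<omega> * (\<Prod>l\<in>F. Fl k A c d l \<omega>) \<partial>M)"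
    unfolding eq by (rule Bochner_Integration.integral_diff[OF int int])
  also have "\<dots> = VC j c d (\<Sum>i\<in>{1..n}. lam i * (1 - z i)) ((\<Sum>i\<in>{1..<k}. lam i) + (\<Sum>i\<in>{k..n}. lam i * (1 - z i))) E F
     - VC j c d (\<Sum>i\<in>{1..n}. lam i * (1 - z i)) ((\<Sum>i\<in>{1..<k}. lam i) + (\<Sum>i\<in>{k..n}. lam i * (1 - z i))) (insert a E) F"
    using insert by (simp add: insert.IH)
  also have "\<dots> = VC j c d (\<Sum>i\<in>{1..n}. lam i * (1 - z i)) ((\<Sum>i\<in>{1..<k}. lam i) + (\<Sum>i\<in>{k..n}. lam i * (1 - z i))) E (insert a F)"
    by (rule VC_insert[symmetric]) (use insert in auto)
  finally show ?case .
qed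

definition jt :: "nat \<Rightarrow> nat \<Rightarrow> (nat \<Rightarrow> nat \<Rightarrow> 'a \<Rightarrow> real) \<Rightarrow> (nat \<Rightarrow> 'a \<Rightarrow> real) \<Rightarrow> (nat \<Rightarrow> 'a \<Rightarrow> real)
   \<Rightarrow> real \<Rightarrow> (nat \<Rightarrow> real) \<Rightarrow> nat \<Rightarrow> 'a \<Rightarrow> real" where
  "jt n k A Cs Ds \<theta> z j \<omega> = (if (\<forall>l<j. resume_fails k A Cs Ds l \<omega>) \<and> \<not> resume_fails k A Cs Ds j \<omega>
     then exp (- \<theta> * round_start Cs Ds (Suc j) \<omega>) *
          (\<Prod>i\<in>{1..n}. z i ^ arr_count A i 0 (round_start Cs Ds (Suc j) \<omega>) \<omega>) else 0)"

lemma power_sum_real: "(\<Prod>q\<in>S. (x::real) ^ f q) = x ^ (\<Sum>q\<in>S. f q)"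
  by (simp add: power_sum)

lemma jt_grid:
  assumes g: "\<And>i. i \<in> {1..n} \<Longrightarrow> good (\<lambda>m. A i m \<omega>)" and c: "\<And>l. 0 \<le> c l" and d: "\<And>l. 0 \<le> d l"
    and kn: "k \<le> Suc n"
  shows "jt n k A (\<lambda>l _. c l) (\<lambda>l _. d l) \<theta> z j \<omega> =
    exp (- \<theta> * (\<Sum>p<Suc j. c p + d p)) * (PiEw n k A c d z j {j} \<omega> * (\<Prod>l\<in>{..<j}. Fl k A c d l \<omega>))"
proof -
  have u: "0 \<le> uu c d p" for p using c d by (simp add: uu_def)
  have P0: "PiEw n k A c d z j {} \<omega> = (\<Prod>i\<in>{1..n}. z i ^ arr_count A i 0 (round_start (\<lambda>l _. c l) (\<lambda>l _. d l) (Suc j) \<omega>) \<omega>)"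
    unfolding PiEw_def
  proof (intro prod.cong refl)
    fix i assume i: "i \<in> {1..n}"
    have T: "round_start (\<lambda>l _. c l) (\<lambda>l _. d l) (Suc j) \<omega> = tg (uu c d) (2 * Suc j)"
      unfolding tg_uu_even round_start_const ..
    have "arr_count A i 0 (round_start (\<lambda>l _. c l) (\<lambda>l _. d l) (Suc j) \<omega>) \<omega> =
        cnt (\<lambda>m. A i m \<omega>) 0 (tg (uu c d) (2 * Suc j))"
      unfolding arr_count_cnt T ..
    also have "\<dots> = (\<Sum>q<2 * Suc j. cnt (\<lambda>m. A i m \<omega>) (tg (uu c d) q) (tg (uu c d) (Suc q)))"
      by (rule cnt_grid[where u="uu c d", OF g[OF i] u])
    finally have "arr_count A i 0 (round_start (\<lambda>l _. c l) (\<lambda>l _. d l) (Suc j) \<omega>) \<omega> =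
        (\<Sum>q<2 * Suc j. cnt (\<lambda>m. A i m \<omega>) (tg (uu c d) q) (tg (uu c d) (Suc q)))" .
    then show "(\<Prod>q<2 * Suc j. Pw k z {} i q ^ cnt (\<lambda>m. A i m \<omega>) (tg (uu c d) q) (tg (uu c d) (Suc q))) =
        z i ^ arr_count A i 0 (round_start (\<lambda>l _. c l) (\<lambda>l _. d l) (Suc j) \<omega>) \<omega>"
      by (simp add: Pw_def power_sum_real)
  qed
  have P1: "PiEw n k A c d z j {j} \<omega> = PiEw n k A c d z j {} \<omega> * (1 - Fl k A c d j \<omega>)"
    using PiEw_insert[where a=j and E="{}" and j=j and k=k and n=n and A=A and c=c and d=d and z=z and \<omega>=\<omega>] kn by simp
  have cond: "(if (\<forall>l<j. resume_fails k A (\<lambda>l _. c l) (\<lambda>l _. d l) l \<omega>) \<and> \<not> resume_fails k A (\<lambda>l _. c l) (\<lambda>l _. d l) j \<omega> then 1 else 0)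
     = (\<Prod>l\<in>{..<j}. Fl k A c d l \<omega>) * (1 - Fl k A c d j \<omega>)"
  proof -
    have "(\<Prod>l\<in>{..<j}. Fl k A c d l \<omega>) = (if \<forall>l<j. resume_fails k A (\<lambda>l _. c l) (\<lambda>l _. d l) l \<omega> then 1 else 0)"
      unfolding Fl_def by (induction j) (auto simp: less_Suc_eq)
    then show ?thesis by (auto simp: Fl_def)
  qed
  have "jt n k A (\<lambda>l _. c l) (\<lambda>l _. d l) \<theta> z j \<omega> =
     exp (- \<theta> * (\<Sum>p<Suc j. c p + d p)) * PiEw n k A c d z j {} \<omega> *
     (if (\<forall>l<j. resume_fails k A (\<lambda>l _. c l) (\<lambda>l _. d l) l \<omega>) \<and> \<not> resume_fails k A (\<lambda>l _. c l) (\<lambda>l _. d l) j \<omega> then 1 else 0)"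
    unfolding jt_def P0 round_start_const by auto
  also have "\<dots> = exp (- \<theta> * (\<Sum>p<Suc j. c p + d p)) * (PiEw n k A c d z j {j} \<omega> * (\<Prod>l\<in>{..<j}. Fl k A c d l \<omega>))"
    unfolding cond P1 by (simp add: algebra_simps)
  finally show ?thesis .
qed

definition psi :: "real \<Rightarrow> real \<Rightarrow> real \<Rightarrow> nat \<Rightarrow> (nat \<Rightarrow> real) \<Rightarrow> (nat \<Rightarrow> real) \<Rightarrow> real" where
  "psi \<theta> LA LB j c d = (\<Prod>l<j. exp (- (\<theta> + LA) * c l) * (exp (- (\<theta> + LA) * d l) - exp (- (\<theta> + LB) * d l)))
       * (exp (- (\<theta> + LA) * c j) * exp (- (\<theta> + LB) * d j))"

lemma psi_eq:
  "exp (- \<theta> * (\<Sum>p<Suc j. c p + d p)) * VC j c d LA LB {j} {..<j} = psi \<theta> LA LB j c d"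
proof -
  define G where "G p = (exp (- \<theta> * c p) * exp (- \<theta> * d p)) * (exp (- LA * c p) *
     (if p \<in> {j} then exp (- LB * d p) else if p \<in> {..<j} then exp (- LA * d p) - exp (- LB * d p) else exp (- LA * d p)))" for p
  have "exp (- \<theta> * (\<Sum>p<Suc j. c p + d p)) = (\<Prod>p<Suc j. exp (- \<theta> * c p) * exp (- \<theta> * d p))"
    by (simp add: exp_sum[symmetric] sum_distrib_left exp_add[symmetric] algebra_simps sum_negf[symmetric] flip: sum.distrib)
  then have "exp (- \<theta> * (\<Sum>p<Suc j. c p + d p)) * VC j c d LA LB {j} {..<j} = (\<Prod>p<Suc j. G p)"
    unfolding VC_def G_def by (simp add: prod.distrib)
  also have "\<dots> = (\<Prod>p<j. G p) * G j" by (rule prod.lessThan_Suc)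
  also have "(\<Prod>p<j. G p) = (\<Prod>l<j. exp (- (\<theta> + LA) * c l) * (exp (- (\<theta> + LA) * d l) - exp (- (\<theta> + LB) * d l)))"
  proof (rule prod.cong[OF refl])
    fix p assume "p \<in> {..<j}"
    then show "G p = exp (- (\<theta> + LA) * c p) * (exp (- (\<theta> + LA) * d p) - exp (- (\<theta> + LB) * d p))"
      unfolding G_def by (simp add: algebra_simps exp_add[symmetric] exp_diff)
  qed
  also have "G j = exp (- (\<theta> + LA) * c j) * exp (- (\<theta> + LB) * d j)"
    unfolding G_def by (simp add: algebra_simps exp_add[symmetric])
  finally show ?thesis unfolding psi_def .
qed

lemma (in prob_space) jt_expect:
  fixes A :: "nat \<Rightarrow> nat \<Rightarrow> 'a \<Rightarrow> real" and c d z lam :: "nat \<Rightarrow> real"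
  assumes Am: "\<And>i m. A i m \<in> borel_measurable M"
    and mp: "\<And>(u::nat\<Rightarrow>real) (w::nat\<Rightarrow>nat\<Rightarrow>real) Q. (\<And>p. 0 \<le> u p) \<Longrightarrow> (\<And>i q. i \<in> {1..n} \<Longrightarrow> 0 \<le> w i q)
        \<Longrightarrow> (\<And>i q. i \<in> {1..n} \<Longrightarrow> w i q \<le> 1) \<Longrightarrow>
       (\<integral>\<^sup>+\<omega>. ennreal (\<Prod>i\<in>{1..n}. \<Prod>q<Q. w i q ^ cnt (\<lambda>m. A i m \<omega>) (tg u q) (tg u (Suc q))) \<partial>M)
         = ennreal (\<Prod>i\<in>{1..n}. exp (- lam i * (\<Sum>q<Q. (1 - w i q) * u q)))"
    and gd: "AE \<omega> in M. \<forall>i\<in>{1..n}. good (\<lambda>m. A i m \<omega>)"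
    and k: "1 \<le> k" "k \<le> n" and z: "\<And>i. i \<in> {1..n} \<Longrightarrow> 0 \<le> z i \<and> z i \<le> 1"
    and c: "\<And>l. 0 \<le> c l" and d: "\<And>l. 0 \<le> d l"
  shows "(\<integral>\<^sup>+\<omega>. ennreal (jt n k A (\<lambda>l _. c l) (\<lambda>l _. d l) \<theta> z j \<omega>) \<partial>M) =
    ennreal (psi \<theta> (\<Sum>i\<in>{1..n}. lam i * (1 - z i)) ((\<Sum>i\<in>{1..<k}. lam i) + (\<Sum>i\<in>{k..n}. lam i * (1 - z i))) j c d)"
proof -
  define e where "e = exp (- \<theta> * (\<Sum>p<Suc j. c p + d p))"
  define X where "X \<omega> = PiEw n k A c d z j {j} \<omega> * (\<Prod>l\<in>{..<j}. Fl k A c d l \<omega>)" for \<omega>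
  note [measurable] = Am
  have kn: "k \<le> Suc n" using k by simp
  have X0: "0 \<le> X \<omega>" and X1: "X \<omega> \<le> 1" for \<omega>
  proof -
    have p: "0 \<le> PiEw n k A c d z j {j} \<omega>" "PiEw n k A c d z j {j} \<omega> \<le> 1"
      by (rule PiEw_bound(1), rule z, assumption) (rule PiEw_bound(2), rule z, assumption)
    have f: "0 \<le> (\<Prod>l\<in>{..<j}. Fl k A c d l \<omega>)" "(\<Prod>l\<in>{..<j}. Fl k A c d l \<omega>) \<le> 1"
      by (auto intro!: prod_nonneg prod_le_1 simp: Fl_bound)
    show "0 \<le> X \<omega>" "X \<omega> \<le> 1" unfolding X_def using p f by (simp_all add: mult_le_one)
  qed
  have Xm: "X \<in> borel_measurable M" unfolding X_def by measurable
  have intX: "integrable M X"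
    by (rule integrable_const_bound[where B=1]) (use X0 X1 Xm in auto)
  have "(\<integral>\<^sup>+\<omega>. ennreal (jt n k A (\<lambda>l _. c l) (\<lambda>l _. d l) \<theta> z j \<omega>) \<partial>M) = (\<integral>\<^sup>+\<omega>. ennreal (e * X \<omega>) \<partial>M)"
  proof (rule nn_integral_cong_AE)
    show "AE \<omega> in M. ennreal (jt n k A (\<lambda>l _. c l) (\<lambda>l _. d l) \<theta> z j \<omega>) = ennreal (e * X \<omega>)"
      using gd
    proof eventually_elim
      case (elim \<omega>)
      have "jt n k A (\<lambda>l _. c l) (\<lambda>l _. d l) \<theta> z j \<omega> = e * X \<omega>"
        unfolding e_def X_def by (rule jt_grid[OF _ c d kn]) (use elim in auto)
      then show ?case by simp
    qed
  qed
  also have "\<dots> = ennreal (\<integral>\<omega>. e * X \<omega> \<partial>M)"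
    by (rule nn_integral_eq_integral) (use intX X0 in \<open>auto simp: e_def\<close>)
  also have "(\<integral>\<omega>. e * X \<omega> \<partial>M) = e * (\<integral>\<omega>. X \<omega> \<partial>M)" by simp
  also have "(\<integral>\<omega>. X \<omega> \<partial>M) = VC j c d (\<Sum>i\<in>{1..n}. lam i * (1 - z i)) ((\<Sum>i\<in>{1..<k}. lam i) + (\<Sum>i\<in>{k..n}. lam i * (1 - z i))) {j} {..<j}"
    unfolding X_def by (rule V_lemma[OF Am mp k z c d]) auto
  finally show ?thesis unfolding e_def psi_eq .
qed

lemma arr_time_meas[measurable]:
  assumes [measurable]: "\<And>m. A i m \<in> borel_measurable N"
  shows "(\<lambda>\<omega>. arr_time A i m \<omega>) \<in> borel_measurable N"
  unfolding arr_time_def by measurable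

lemma arr_count_meas[measurable]:
  assumes [measurable]: "\<And>m. A i m \<in> borel_measurable N" "a \<in> borel_measurable N" "b \<in> borel_measurable N"
  shows "(\<lambda>\<omega>. arr_count A i (a \<omega>) (b \<omega>) \<omega>) \<in> N \<rightarrow>\<^sub>M count_space UNIV"
  unfolding arr_count_def by measurable

lemma round_start_meas[measurable]:
  assumes [measurable]: "\<And>l. Cs l \<in> borel_measurable N" "\<And>l. Ds l \<in> borel_measurable N"
  shows "(\<lambda>\<omega>. round_start Cs Ds j \<omega>) \<in> borel_measurable N"
  unfolding round_start_def by measurable

lemma resume_fails_meas[measurable]:
  assumes [measurable]: "\<And>i m. A i m \<in> borel_measurable N" "\<And>l. Cs l \<in> borel_measurable N" "\<And>l. Ds l \<in> borel_measurable N"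
  shows "Measurable.pred N (\<lambda>\<omega>. resume_fails k A Cs Ds j \<omega>)"
  unfolding resume_fails_def by measurable

lemma jt_meas[measurable]:
  assumes [measurable]: "\<And>i m. A i m \<in> borel_measurable N" "\<And>l. Cs l \<in> borel_measurable N" "\<And>l. Ds l \<in> borel_measurable N"
  shows "(\<lambda>\<omega>. jt n k A Cs Ds \<theta> z j \<omega>) \<in> borel_measurable N"
  unfolding jt_def by measurable

lemma chain_len_meas[measurable]:
  assumes [measurable]: "\<And>i m. A i m \<in> borel_measurable N" "\<And>l. Cs l \<in> borel_measurable N" "\<And>l. Ds l \<in> borel_measurable N"
  shows "(\<lambda>\<omega>. chain_len k A Cs Ds \<omega>) \<in> borel_measurable N"
proof -
  have L: "(\<lambda>\<omega>. LEAST j. \<not> resume_fails k A Cs Ds j \<omega>) \<in> N \<rightarrow>\<^sub>M count_space UNIV" by measurable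
  have "(\<lambda>\<omega>. round_start Cs Ds (Suc (LEAST j. \<not> resume_fails k A Cs Ds j \<omega>)) \<omega>) \<in> borel_measurable N"
    by (rule measurable_compose_countable'[where I=UNIV and f="\<lambda>j \<omega>. round_start Cs Ds (Suc j) \<omega>", OF _ L]) auto
  then show ?thesis unfolding chain_len_def .
qed

lemma integrand_meas[measurable]:
  assumes [measurable]: "\<And>i m. A i m \<in> borel_measurable N" "\<And>l. Cs l \<in> borel_measurable N" "\<And>l. Ds l \<in> borel_measurable N"
  shows "(\<lambda>\<omega>. exp (- \<theta> * chain_len k A Cs Ds \<omega>) * (\<Prod>i\<in>{1..n}. z i ^ chain_arrivals k A Cs Ds i \<omega>)) \<in> borel_measurable N"
proof -
  have [measurable]: "(\<lambda>\<omega>. chain_arrivals k A Cs Ds i \<omega>) \<in> N \<rightarrow>\<^sub>M count_space UNIV" for i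
    unfolding chain_arrivals_def by measurable
  show ?thesis by measurable
qed

lemma F_sums:
  assumes ex: "\<exists>j. \<not> resume_fails k A Cs Ds j \<omega>"
  shows "(\<lambda>j. jt n k A Cs Ds \<theta> z j \<omega>) sums
     (exp (- \<theta> * chain_len k A Cs Ds \<omega>) * (\<Prod>i\<in>{1..n}. z i ^ chain_arrivals k A Cs Ds i \<omega>))"
proof -
  define j0 where "j0 = (LEAST j. \<not> resume_fails k A Cs Ds j \<omega>)"
  have j0: "\<not> resume_fails k A Cs Ds j0 \<omega>" unfolding j0_def using ex by (rule LeastI_ex)
  have lt: "resume_fails k A Cs Ds l \<omega>" if "l < j0" for l
    using not_less_Least[OF that[unfolded j0_def]] by simp
  have cond: "((\<forall>l<j. resume_fails k A Cs Ds l \<omega>) \<and> \<not> resume_fails k A Cs Ds j \<omega>) \<longleftrightarrow> j = j0" for j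
  proof
    assume a: "(\<forall>l<j. resume_fails k A Cs Ds l \<omega>) \<and> \<not> resume_fails k A Cs Ds j \<omega>"
    have "j0 \<le> j" unfolding j0_def using a by (intro Least_le) simp
    moreover have "\<not> j0 < j" using a j0 by auto
    ultimately show "j = j0" by simp
  qed (use j0 lt in auto)
  have "jt n k A Cs Ds \<theta> z j \<omega> = (if j = j0 then exp (- \<theta> * chain_len k A Cs Ds \<omega>) * (\<Prod>i\<in>{1..n}. z i ^ chain_arrivals k A Cs Ds i \<omega>) else 0)" for j
    unfolding jt_def cond chain_len_def chain_arrivals_def j0_def by simp
  then have "(\<lambda>j. jt n k A Cs Ds \<theta> z j \<omega>) = (\<lambda>j. if j = j0 then exp (- \<theta> * chain_len k A Cs Ds \<omega>) * (\<Prod>i\<in>{1..n}. z i ^ chain_arrivals k A Cs Ds i \<omega>) else 0)"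
    by auto
  then show ?thesis
    using sums_single[of j0 "\<lambda>_. exp (- \<theta> * chain_len k A Cs Ds \<omega>) * (\<Prod>i\<in>{1..n}. z i ^ chain_arrivals k A Cs Ds i \<omega>)"]
    by simp
qed

lemma jt_cong:
  assumes kn: "k \<le> Suc n" and A: "\<And>i m. i \<in> {1..n} \<Longrightarrow> A i m \<omega> = A' i m \<omega>'"
    and C: "\<And>l. Cs l \<omega> = Cs' l \<omega>'" and D: "\<And>l. Ds l \<omega> = Ds' l \<omega>'"
  shows "jt n k A Cs Ds \<theta> z j \<omega> = jt n k A' Cs' Ds' \<theta> z j \<omega>'"
proof -
  have rs: "round_start Cs Ds l \<omega> = round_start Cs' Ds' l \<omega>'" for l
    unfolding round_start_def C D ..
  have ac: "arr_count A i a b \<omega> = arr_count A' i a b \<omega>'" if "i \<in> {1..n}" for i a b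
    unfolding arr_count_def arr_time_def using A[OF that] by simp
  have rf: "resume_fails k A Cs Ds l \<omega> = resume_fails k A' Cs' Ds' l \<omega>'" for l
    unfolding resume_fails_def rs C D using ac kn by (intro bex_cong refl) auto
  show ?thesis unfolding jt_def rf rs using ac by (auto intro!: prod.cong)
qed

lemma integrand_cong:
  assumes kn: "k \<le> Suc n" and A: "\<And>i m. i \<in> {1..n} \<Longrightarrow> A i m \<omega> = A' i m \<omega>"
  shows "exp (- \<theta> * chain_len k A Cs Ds \<omega>) * (\<Prod>i\<in>{1..n}. z i ^ chain_arrivals k A Cs Ds i \<omega>) =
         exp (- \<theta> * chain_len k A' Cs Ds \<omega>) * (\<Prod>i\<in>{1..n}. z i ^ chain_arrivals k A' Cs Ds i \<omega>)"
proof -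
  have ac: "arr_count A i a b \<omega> = arr_count A' i a b \<omega>" if "i \<in> {1..n}" for i a b
    unfolding arr_count_def arr_time_def using A[OF that] by simp
  have rf: "resume_fails k A Cs Ds l \<omega> = resume_fails k A' Cs Ds l \<omega>" for l
    unfolding resume_fails_def using ac kn by (intro bex_cong refl) auto
  have cl: "chain_len k A Cs Ds \<omega> = chain_len k A' Cs Ds \<omega>"
    unfolding chain_len_def rf ..
  show ?thesis unfolding chain_arrivals_def cl using ac by (auto intro!: prod.cong)
qed

lemma (in prob_space) indep_fubini:
  assumes ind: "indep_var S X T Y" and f[measurable]: "f \<in> borel_measurable (S \<Otimes>\<^sub>M T)"
  shows "(\<integral>\<^sup>+\<omega>. f (X \<omega>, Y \<omega>) \<partial>M) = (\<integral>\<^sup>+\<omega>. (\<integral>\<^sup>+\<omega>'. f (X \<omega>, Y \<omega>') \<partial>M) \<partial>M)"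
proof -
  have rvX[measurable]: "X \<in> M \<rightarrow>\<^sub>M S" and rvY[measurable]: "Y \<in> M \<rightarrow>\<^sub>M T"
    and eq: "distr M S X \<Otimes>\<^sub>M distr M T Y = distr M (S \<Otimes>\<^sub>M T) (\<lambda>x. (X x, Y x))"
    using ind unfolding indep_var_distribution_eq by auto
  interpret PX: prob_space "distr M S X" by (rule prob_space_distr[OF rvX])
  interpret PY: prob_space "distr M T Y" by (rule prob_space_distr[OF rvY])
  interpret P: pair_sigma_finite "distr M S X" "distr M T Y" ..
  have sets_eq: "sets (distr M S X \<Otimes>\<^sub>M distr M T Y) = sets (S \<Otimes>\<^sub>M T)"
    by (intro sets_pair_measure_cong) auto
  have f': "f \<in> borel_measurable (distr M S X \<Otimes>\<^sub>M distr M T Y)"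
    using f by (simp add: measurable_cong_sets[OF sets_eq refl])
  have "(\<integral>\<^sup>+\<omega>. f (X \<omega>, Y \<omega>) \<partial>M) = (\<integral>\<^sup>+p. f p \<partial>distr M (S \<Otimes>\<^sub>M T) (\<lambda>x. (X x, Y x)))"
    by (subst nn_integral_distr) auto
  also have "\<dots> = (\<integral>\<^sup>+p. f p \<partial>(distr M S X \<Otimes>\<^sub>M distr M T Y))" unfolding eq ..
  also have "\<dots> = (\<integral>\<^sup>+x. \<integral>\<^sup>+y. f (x, y) \<partial>distr M T Y \<partial>distr M S X)"
    using PY.nn_integral_fst[OF f'] by simp
  also have "\<dots> = (\<integral>\<^sup>+\<omega>. \<integral>\<^sup>+y. f (X \<omega>, y) \<partial>distr M T Y \<partial>M)"
  proof -
    have "(\<lambda>x. \<integral>\<^sup>+y. f (x, y) \<partial>distr M T Y) \<in> borel_measurable (distr M S X)"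
      by (rule PY.borel_measurable_nn_integral_fst[OF f'])
    then show ?thesis by (rule nn_integral_distr[OF rvX])
  qed
  also have "\<dots> = (\<integral>\<^sup>+\<omega>. \<integral>\<^sup>+\<omega>'. f (X \<omega>, Y \<omega>') \<partial>M \<partial>M)"
  proof (intro nn_integral_cong)
    fix \<omega> assume "\<omega> \<in> space M"
    then have x: "X \<omega> \<in> space S" using rvX by (auto simp: measurable_def)
    have "(\<lambda>y. f (X \<omega>, y)) \<in> borel_measurable T"
      using measurable_Pair2[OF f x] .
    then show "(\<integral>\<^sup>+y. f (X \<omega>, y) \<partial>distr M T Y) = (\<integral>\<^sup>+\<omega>'. f (X \<omega>, Y \<omega>') \<partial>M)"
      by (subst nn_integral_distr[OF rvY]) auto
  qed
  finally show ?thesis .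
qed

lemma prod_last_if: "(\<Prod>l\<in>{..j}. if l < j then (x::real) else y) = x ^ j * y"
proof -
  have "(\<Prod>l\<in>{..j}. if l < j then x else y) = (\<Prod>l<Suc j. if l < j then x else y)"
    by (simp add: lessThan_Suc_atMost)
  also have "\<dots> = (\<Prod>l<j. if l < j then x else y) * y" by simp
  also have "(\<Prod>l<j. if l < j then x else y) = (\<Prod>l<j. x)" by (intro prod.cong) auto
  finally show ?thesis by simp
qed

lemma (in prob_space) psi_expect:
  fixes A :: "nat \<Rightarrow> nat \<Rightarrow> 'a \<Rightarrow> real" and Cs Ds :: "nat \<Rightarrow> 'a \<Rightarrow> real"
  assumes Cm: "\<And>j. Cs j \<in> borel_measurable M" "\<And>j. distr M borel (Cs j) = C"
    and Dm: "\<And>j. Ds j \<in> borel_measurable M" "\<And>j. distr M borel (Ds j) = D"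
    and C0: "AE x in C. 0 \<le> x" and D0: "AE x in D. 0 \<le> x"
    and ind: "indep_vars (\<lambda>_. borel) (src_rv A Cs Ds) I" and sub: "range Pause \<subseteq> I" "range Resume \<subseteq> I"
    and ab: "0 \<le> \<theta> + LA" "0 \<le> \<theta> + LB"
  shows "(\<integral>\<omega>. psi \<theta> LA LB j (\<lambda>l. Cs l \<omega>) (\<lambda>l. Ds l \<omega>) \<partial>M) =
      (lst C (\<theta> + LA) * (lst D (\<theta> + LA) - lst D (\<theta> + LB))) ^ j * (lst C (\<theta> + LA) * lst D (\<theta> + LB))"
proof -
  define a where "a = \<theta> + LA"
  define b where "b = \<theta> + LB"
  have a: "0 \<le> a" and b: "0 \<le> b" using ab by (auto simp: a_def b_def)
  define fs where "fs s x = (case s of Pause l \<Rightarrow> exp (- a * x)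
     | Resume l \<Rightarrow> (if l < j then exp (- a * x) - exp (- b * x) else exp (- b * x)) | Arr _ _ \<Rightarrow> 1)" for s x
  define J where "J = Pause ` {..j} \<union> Resume ` {..j}"
  define Y where "Y s \<omega> = fs s (src_rv A Cs Ds s \<omega>)" for s \<omega>
  have finJ: "finite J" unfolding J_def by simp
  have Cnn: "AE \<omega> in M. 0 \<le> Cs l \<omega>" for l
  proof -
    have "AE x in distr M borel (Cs l). 0 \<le> x" unfolding Cm(2) by (rule C0)
    then show ?thesis by (subst (asm) AE_distr_iff) (auto intro: Cm(1))
  qed
  have Dnn: "AE \<omega> in M. 0 \<le> Ds l \<omega>" for l
  proof -
    have "AE x in distr M borel (Ds l). 0 \<le> x" unfolding Dm(2) by (rule D0)
    then show ?thesis by (subst (asm) AE_distr_iff) (auto intro: Dm(1))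
  qed
  have fs_meas: "fs s \<in> borel_measurable borel" for s
    unfolding fs_def by (cases s) auto
  have fs_bound: "\<bar>fs s x\<bar> \<le> 1" if x: "0 \<le> x" for s x
  proof -
    have ax: "0 \<le> a * x" and bx: "0 \<le> b * x" using a b x by auto
    have e1: "0 < exp (- a * x)" "exp (- a * x) \<le> 1" using ax by auto
    have e2: "0 < exp (- b * x)" "exp (- b * x) \<le> 1" using bx by auto
    have f1: "\<bar>exp (- a * x)\<bar> \<le> 1" "\<bar>exp (- b * x)\<bar> \<le> 1" using e1 e2 by auto
    have f2: "\<bar>exp (- a * x) - exp (- b * x)\<bar> \<le> 1"
      by (intro abs_leI) (use e1 e2 in linarith)+
    show ?thesis unfolding fs_def using f1 f2 by (auto split: src.split)
  qed
  have Ym: "Y s \<in> borel_measurable M" if "s \<in> J" for s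
  proof -
    have "src_rv A Cs Ds s \<in> borel_measurable M"
      using that Cm(1) Dm(1) by (auto simp: J_def src_rv_def)
    then show ?thesis unfolding Y_def by (rule measurable_compose[OF _ fs_meas])
  qed
  have Yint: "integrable M (Y s)" if s: "s \<in> J" for s
  proof (rule integrable_const_bound[where B=1])
    have "AE \<omega> in M. 0 \<le> src_rv A Cs Ds s \<omega>"
      using s Cnn Dnn by (auto simp: J_def src_rv_def)
    then show "AE \<omega> in M. norm (Y s \<omega>) \<le> 1" by eventually_elim (simp add: Y_def fs_bound)
  qed (rule Ym[OF s])
  have indJ: "indep_vars (\<lambda>_. borel) Y J"
  proof -
    have "indep_vars (\<lambda>_. borel) (src_rv A Cs Ds) J"
      by (rule indep_vars_subset[OF ind]) (use sub in \<open>auto simp: J_def\<close>)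
    from indep_vars_compose2[OF this fs_meas]
    show ?thesis unfolding Y_def by simp
  qed
  have psi_prod: "psi \<theta> LA LB j (\<lambda>l. Cs l \<omega>) (\<lambda>l. Ds l \<omega>) = (\<Prod>s\<in>J. Y s \<omega>)" for \<omega>
  proof -
    have "(\<Prod>s\<in>J. Y s \<omega>) = (\<Prod>s\<in>Pause ` {..j}. Y s \<omega>) * (\<Prod>s\<in>Resume ` {..j}. Y s \<omega>)"
      unfolding J_def by (rule prod.union_disjoint) auto
    also have "(\<Prod>s\<in>Pause ` {..j}. Y s \<omega>) = (\<Prod>l\<in>{..j}. exp (- a * Cs l \<omega>))"
      by (subst prod.reindex) (auto simp: inj_on_def Y_def fs_def src_rv_def)
    also have "(\<Prod>s\<in>Resume ` {..j}. Y s \<omega>) =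
        (\<Prod>l\<in>{..j}. if l < j then exp (- a * Ds l \<omega>) - exp (- b * Ds l \<omega>) else exp (- b * Ds l \<omega>))"
      by (subst prod.reindex) (auto simp: inj_on_def Y_def fs_def src_rv_def cong: if_cong)
    also have "(\<Prod>l\<in>{..j}. exp (- a * Cs l \<omega>)) = (\<Prod>l<j. exp (- a * Cs l \<omega>)) * exp (- a * Cs j \<omega>)"
      by (simp add: lessThan_Suc_atMost[symmetric])
    also have "(\<Prod>l\<in>{..j}. if l < j then exp (- a * Ds l \<omega>) - exp (- b * Ds l \<omega>) else exp (- b * Ds l \<omega>))
       = (\<Prod>l<j. exp (- a * Ds l \<omega>) - exp (- b * Ds l \<omega>)) * exp (- b * Ds j \<omega>)"
      by (simp add: lessThan_Suc_atMost[symmetric])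
    finally show ?thesis unfolding psi_def a_def[symmetric] b_def[symmetric] prod.distrib by (simp only: mult_ac)
  qed
  have EP: "(\<integral>\<omega>. Y (Pause l) \<omega> \<partial>M) = lst C a" for l
  proof -
    have "(\<integral>\<omega>. Y (Pause l) \<omega> \<partial>M) = (\<integral>\<omega>. exp (- a * Cs l \<omega>) \<partial>M)" by (simp add: Y_def fs_def src_rv_def)
    also have "\<dots> = (\<integral>x. exp (- a * x) \<partial>distr M borel (Cs l))"
      by (rule integral_distr[symmetric]) (auto intro: Cm(1))
    finally show ?thesis unfolding Cm(2) lst_def .
  qed
  interpret Dp: prob_space D using prob_space_distr[OF Dm(1)[of 0]] Dm(2)[of 0] by simp
  have Dint: "integrable D (\<lambda>x. exp (- c * x))" if "0 \<le> c" for c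
  proof (rule Dp.integrable_const_bound[where B=1])
    show "AE x in D. norm (exp (- c * x)) \<le> 1" using D0 by eventually_elim (use that in simp)
    have sD: "sets D = sets borel" unfolding Dm(2)[symmetric, of 0] by simp
    show "(\<lambda>x. exp (- c * x)) \<in> borel_measurable D"
      by (subst measurable_cong_sets[OF sD refl]) simp
  qed
  have ER: "(\<integral>\<omega>. Y (Resume l) \<omega> \<partial>M) = (if l < j then lst D a - lst D b else lst D b)" for l
  proof -
    have "(\<integral>\<omega>. Y (Resume l) \<omega> \<partial>M) = (\<integral>x. fs (Resume l) x \<partial>distr M borel (Ds l))"
      unfolding Y_def src_rv_def by (subst integral_distr) (auto intro: Dm(1) fs_meas)
    also have "\<dots> = (\<integral>x. fs (Resume l) x \<partial>D)" unfolding Dm(2) ..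
    also have "\<dots> = (if l < j then lst D a - lst D b else lst D b)"
      unfolding fs_def lst_def using Dint[OF a] Dint[OF b] by (auto simp: Bochner_Integration.integral_diff)
    finally show ?thesis .
  qed
  have "(\<integral>\<omega>. psi \<theta> LA LB j (\<lambda>l. Cs l \<omega>) (\<lambda>l. Ds l \<omega>) \<partial>M) = (\<integral>\<omega>. (\<Prod>s\<in>J. Y s \<omega>) \<partial>M)"
    unfolding psi_prod ..
  also have "\<dots> = (\<Prod>s\<in>J. \<integral>\<omega>. Y s \<omega> \<partial>M)"
    by (rule indep_vars_lebesgue_integral[OF finJ indJ Yint])
  also have "\<dots> = (\<Prod>s\<in>Pause ` {..j}. \<integral>\<omega>. Y s \<omega> \<partial>M) * (\<Prod>s\<in>Resume ` {..j}. \<integral>\<omega>. Y s \<omega> \<partial>M)"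
    unfolding J_def by (rule prod.union_disjoint) auto
  also have "(\<Prod>s\<in>Pause ` {..j}. \<integral>\<omega>. Y s \<omega> \<partial>M) = lst C a ^ Suc j"
    by (subst prod.reindex) (auto simp: inj_on_def EP)
  also have "(\<Prod>s\<in>Resume ` {..j}. \<integral>\<omega>. Y s \<omega> \<partial>M) = (lst D a - lst D b) ^ j * lst D b"
    by (subst prod.reindex) (auto simp: inj_on_def ER prod_last_if)
  finally show ?thesis unfolding a_def b_def by (simp add: power_mult_distrib mult_ac)
qed

lemma LA_le_LB:
  fixes lam z :: "nat \<Rightarrow> real" and k n :: nat
  assumes k: "1 \<le> k" "k \<le> n" and lam: "\<And>i. i \<in> {1..n} \<Longrightarrow> 0 < lam i" and z: "\<And>i. i \<in> {1..n} \<Longrightarrow> 0 \<le> z i \<and> z i \<le> 1"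
  shows "0 \<le> (\<Sum>i\<in>{1..n}. lam i * (1 - z i))"
    and "(\<Sum>i\<in>{1..n}. lam i * (1 - z i)) \<le> (\<Sum>i\<in>{1..<k}. lam i) + (\<Sum>i\<in>{k..n}. lam i * (1 - z i))"
proof -
  show "0 \<le> (\<Sum>i\<in>{1..n}. lam i * (1 - z i))"
    using lam z by (intro sum_nonneg mult_nonneg_nonneg) (auto intro: less_imp_le)
  have "(\<Sum>i\<in>{1..n}. lam i * (1 - z i)) \<le> (\<Sum>i\<in>{1..n}. lam i * (1 - (if i < k then 0 else z i)))"
    using lam z by (intro sum_mono mult_left_mono) (auto intro: less_imp_le)
  also have "\<dots> = (\<Sum>i\<in>{1..<k}. lam i) + (\<Sum>i\<in>{k..n}. lam i * (1 - z i))"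
    by (rule kappa_split[OF k])
  finally show "(\<Sum>i\<in>{1..n}. lam i * (1 - z i)) \<le> (\<Sum>i\<in>{1..<k}. lam i) + (\<Sum>i\<in>{k..n}. lam i * (1 - z i))" .
qed

lemma psi_bounds:
  assumes c: "\<And>l. 0 \<le> c l" and d: "\<And>l. 0 \<le> d l" and a: "0 \<le> \<theta> + LA" and ab: "\<theta> + LA \<le> \<theta> + LB"
  shows "0 \<le> psi \<theta> LA LB j c d \<and> psi \<theta> LA LB j c d \<le> 1"
proof -
  have e: "0 \<le> exp (- x * y) \<and> exp (- x * y) \<le> 1" if "0 \<le> x" "0 \<le> y" for x y :: real
    using that by auto
  have b: "0 \<le> exp (- (\<theta> + LA) * d l) - exp (- (\<theta> + LB) * d l) \<and> exp (- (\<theta> + LA) * d l) - exp (- (\<theta> + LB) * d l) \<le> 1" for l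
  proof -
    have "(\<theta> + LA) * d l \<le> (\<theta> + LB) * d l" using ab d[of l] by (intro mult_right_mono) auto
    then have "- (\<theta> + LB) * d l \<le> - (\<theta> + LA) * d l" by linarith
    then have "exp (- (\<theta> + LB) * d l) \<le> exp (- (\<theta> + LA) * d l)" by (rule exp_mono)
    moreover have "0 \<le> exp (- (\<theta> + LB) * d l)" by simp
    moreover have "exp (- (\<theta> + LA) * d l) \<le> 1" using e[OF a d[of l]] by simp
    ultimately show ?thesis by linarith
  qed
  have b2: "0 \<le> \<theta> + LB" using a ab by linarith
  have f: "0 \<le> exp (- (\<theta> + LA) * c l) * (exp (- (\<theta> + LA) * d l) - exp (- (\<theta> + LB) * d l)) \<and>
      exp (- (\<theta> + LA) * c l) * (exp (- (\<theta> + LA) * d l) - exp (- (\<theta> + LB) * d l)) \<le> 1" for l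
    using e[OF a c[of l]] b[of l] by (auto intro: mult_le_one)
  have g: "0 \<le> exp (- (\<theta> + LA) * c j) * exp (- (\<theta> + LB) * d j) \<and> exp (- (\<theta> + LA) * c j) * exp (- (\<theta> + LB) * d j) \<le> 1"
    using e[OF a c[of j]] e[OF b2 d[of j]] by (auto intro: mult_le_one)
  have p: "0 \<le> (\<Prod>l<j. exp (- (\<theta> + LA) * c l) * (exp (- (\<theta> + LA) * d l) - exp (- (\<theta> + LB) * d l))) \<and>
     (\<Prod>l<j. exp (- (\<theta> + LA) * c l) * (exp (- (\<theta> + LA) * d l) - exp (- (\<theta> + LB) * d l))) \<le> 1"
    using f by (auto intro!: prod_nonneg prod_le_1)
  show ?thesis unfolding psi_def using p g by (auto intro: mult_le_one)
qed

lemma (in prob_space) jt_total: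
  fixes A :: "nat \<Rightarrow> nat \<Rightarrow> 'a \<Rightarrow> real" and Cs Ds :: "nat \<Rightarrow> 'a \<Rightarrow> real" and lam z :: "nat \<Rightarrow> real"
  assumes Am: "\<And>i m. A i m \<in> borel_measurable M"
    and Cm: "\<And>j. Cs j \<in> borel_measurable M" "\<And>j. distr M borel (Cs j) = C"
    and Dm: "\<And>j. Ds j \<in> borel_measurable M" "\<And>j. distr M borel (Ds j) = D"
    and C0: "AE x in C. 0 \<le> x" and D0: "AE x in D. 0 \<le> x"
    and ind: "indep_vars (\<lambda>_. borel) (src_rv A Cs Ds) ({Arr i m | i m. i \<in> {1..n}} \<union> range Pause \<union> range Resume)"
    and mp: "\<And>(u::nat\<Rightarrow>real) (w::nat\<Rightarrow>nat\<Rightarrow>real) Q. (\<And>p. 0 \<le> u p) \<Longrightarrow> (\<And>i q. i \<in> {1..n} \<Longrightarrow> 0 \<le> w i q)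
        \<Longrightarrow> (\<And>i q. i \<in> {1..n} \<Longrightarrow> w i q \<le> 1) \<Longrightarrow>
       (\<integral>\<^sup>+\<omega>. ennreal (\<Prod>i\<in>{1..n}. \<Prod>q<Q. w i q ^ cnt (\<lambda>m. A i m \<omega>) (tg u q) (tg u (Suc q))) \<partial>M)
         = ennreal (\<Prod>i\<in>{1..n}. exp (- lam i * (\<Sum>q<Q. (1 - w i q) * u q)))"
    and gd: "AE \<omega> in M. \<forall>i\<in>{1..n}. good (\<lambda>m. A i m \<omega>)"
    and k: "1 \<le> k" "k \<le> n" and z: "\<And>i. i \<in> {1..n} \<Longrightarrow> 0 \<le> z i \<and> z i \<le> 1"
    and lam: "\<And>i. i \<in> {1..n} \<Longrightarrow> 0 < lam i" and \<theta>: "0 \<le> \<theta>"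
  shows "(\<integral>\<^sup>+\<omega>. ennreal (jt n k A Cs Ds \<theta> z j \<omega>) \<partial>M) = ennreal (
    (lst C (\<theta> + (\<Sum>i\<in>{1..n}. lam i * (1 - z i))) *
      (lst D (\<theta> + (\<Sum>i\<in>{1..n}. lam i * (1 - z i))) - lst D (\<theta> + ((\<Sum>i\<in>{1..<k}. lam i) + (\<Sum>i\<in>{k..n}. lam i * (1 - z i)))))) ^ j *
    (lst C (\<theta> + (\<Sum>i\<in>{1..n}. lam i * (1 - z i))) * lst D (\<theta> + ((\<Sum>i\<in>{1..<k}. lam i) + (\<Sum>i\<in>{k..n}. lam i * (1 - z i))))))"
proof -
  define LA where "LA = (\<Sum>i\<in>{1..n}. lam i * (1 - z i))"
  define LB where "LB = (\<Sum>i\<in>{1..<k}. lam i) + (\<Sum>i\<in>{k..n}. lam i * (1 - z i))"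
  have LA0: "0 \<le> LA" and LAB: "LA \<le> LB" unfolding LA_def LB_def using LA_le_LB[OF k lam z] by auto
  have kn: "k \<le> Suc n" using k by simp
  define K1 where "K1 = {Arr i m | i m. i \<in> {1..n}}"
  define K2 where "K2 = range Pause \<union> range Resume"
  define Xa where "Xa \<omega> = restrict (\<lambda>s. src_rv A Cs Ds s \<omega>) K1" for \<omega>
  define Xc where "Xc \<omega> = restrict (\<lambda>s. src_rv A Cs Ds s \<omega>) K2" for \<omega>
  have iv: "indep_var (PiM K2 (\<lambda>_. borel)) Xc (PiM K1 (\<lambda>_. borel)) Xa"
    unfolding Xa_def Xc_def
    by (rule indep_var_restrict[OF ind]) (auto simp: K1_def K2_def)
  define AA where "AA i m p = (if i \<in> {1..n} then snd p (Arr i m) else 0)" for i m and p :: "(src \<Rightarrow> real) \<times> (src \<Rightarrow> real)"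
  define CC where "CC l p = fst p (Pause l)" for l and p :: "(src \<Rightarrow> real) \<times> (src \<Rightarrow> real)"
  define DD where "DD l p = fst p (Resume l)" for l and p :: "(src \<Rightarrow> real) \<times> (src \<Rightarrow> real)"
  define f where "f p = ennreal (jt n k AA CC DD \<theta> z j p)" for p
  have AAm: "AA i m \<in> borel_measurable (PiM K2 (\<lambda>_. borel) \<Otimes>\<^sub>M PiM K1 (\<lambda>_. borel))" for i m
  proof (cases "i \<in> {1..n}")
    case True
    then have "Arr i m \<in> K1" unfolding K1_def by auto
    then have "(\<lambda>p. snd p (Arr i m)) \<in> borel_measurable (PiM K2 (\<lambda>_. borel) \<Otimes>\<^sub>M PiM K1 (\<lambda>_. borel))"
      by (intro measurable_compose[OF measurable_snd measurable_component_singleton])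
    moreover have "AA i m = (\<lambda>p. snd p (Arr i m))" using True by (simp add: AA_def fun_eq_iff)
    ultimately show ?thesis by simp
  next
    case False
    then have "AA i m = (\<lambda>p. 0)" by (auto simp: AA_def fun_eq_iff)
    then show ?thesis by simp
  qed
  have CCm: "CC l \<in> borel_measurable (PiM K2 (\<lambda>_. borel) \<Otimes>\<^sub>M PiM K1 (\<lambda>_. borel))" for l
    unfolding CC_def by (intro measurable_compose[OF measurable_fst measurable_component_singleton]) (auto simp: K2_def)
  have DDm: "DD l \<in> borel_measurable (PiM K2 (\<lambda>_. borel) \<Otimes>\<^sub>M PiM K1 (\<lambda>_. borel))" for l
    unfolding DD_def by (intro measurable_compose[OF measurable_fst measurable_component_singleton]) (auto simp: K2_def)
  have fm: "f \<in> borel_measurable (PiM K2 (\<lambda>_. borel) \<Otimes>\<^sub>M PiM K1 (\<lambda>_. borel))"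
    unfolding f_def by (intro measurable_compose[OF jt_meas[OF AAm CCm DDm] measurable_ennreal])
  have e1: "jt n k A Cs Ds \<theta> z j \<omega> = jt n k AA CC DD \<theta> z j (Xc \<omega>, Xa \<omega>)" for \<omega>
    by (rule jt_cong[OF kn]) (auto simp: AA_def CC_def DD_def Xa_def Xc_def K1_def K2_def src_rv_def)
  have e2: "jt n k AA CC DD \<theta> z j (Xc \<omega>, Xa \<omega>') = jt n k A (\<lambda>l _. Cs l \<omega>) (\<lambda>l _. Ds l \<omega>) \<theta> z j \<omega>'" for \<omega> \<omega>'
    by (rule jt_cong[OF kn]) (auto simp: AA_def CC_def DD_def Xa_def Xc_def K1_def K2_def src_rv_def)
  have Cnn: "AE \<omega> in M. 0 \<le> Cs l \<omega>" for l
  proof -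
    have "AE x in distr M borel (Cs l). 0 \<le> x" unfolding Cm(2) by (rule C0)
    then show ?thesis by (subst (asm) AE_distr_iff) (auto intro: Cm(1))
  qed
  have Dnn: "AE \<omega> in M. 0 \<le> Ds l \<omega>" for l
  proof -
    have "AE x in distr M borel (Ds l). 0 \<le> x" unfolding Dm(2) by (rule D0)
    then show ?thesis by (subst (asm) AE_distr_iff) (auto intro: Dm(1))
  qed
  have CDnn: "AE \<omega> in M. (\<forall>l. 0 \<le> Cs l \<omega>) \<and> (\<forall>l. 0 \<le> Ds l \<omega>)"
    using Cnn Dnn by (simp add: AE_all_countable)
  note [measurable] = Cm(1) Dm(1)
  have psim: "(\<lambda>\<omega>. psi \<theta> LA LB j (\<lambda>l. Cs l \<omega>) (\<lambda>l. Ds l \<omega>)) \<in> borel_measurable M"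
    unfolding psi_def by measurable
  have psib: "AE \<omega> in M. 0 \<le> psi \<theta> LA LB j (\<lambda>l. Cs l \<omega>) (\<lambda>l. Ds l \<omega>) \<and> psi \<theta> LA LB j (\<lambda>l. Cs l \<omega>) (\<lambda>l. Ds l \<omega>) \<le> 1"
    using CDnn by eventually_elim (rule psi_bounds, use LA0 LAB \<theta> in auto)
  have "(\<integral>\<^sup>+\<omega>. ennreal (jt n k A Cs Ds \<theta> z j \<omega>) \<partial>M) = (\<integral>\<^sup>+\<omega>. f (Xc \<omega>, Xa \<omega>) \<partial>M)"
    unfolding f_def e1 ..
  also have "\<dots> = (\<integral>\<^sup>+\<omega>. (\<integral>\<^sup>+\<omega>'. f (Xc \<omega>, Xa \<omega>') \<partial>M) \<partial>M)"
    by (rule indep_fubini[OF iv fm])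
  also have "\<dots> = (\<integral>\<^sup>+\<omega>. ennreal (psi \<theta> LA LB j (\<lambda>l. Cs l \<omega>) (\<lambda>l. Ds l \<omega>)) \<partial>M)"
  proof (rule nn_integral_cong_AE)
    show "AE \<omega> in M. (\<integral>\<^sup>+\<omega>'. f (Xc \<omega>, Xa \<omega>') \<partial>M) = ennreal (psi \<theta> LA LB j (\<lambda>l. Cs l \<omega>) (\<lambda>l. Ds l \<omega>))"
      using CDnn
    proof eventually_elim
      case (elim \<omega>)
      show ?case unfolding f_def e2 LA_def LB_def
        by (rule jt_expect[OF Am mp gd k z]) (use elim in auto)
    qed
  qed
  also have "\<dots> = ennreal (\<integral>\<omega>. psi \<theta> LA LB j (\<lambda>l. Cs l \<omega>) (\<lambda>l. Ds l \<omega>) \<partial>M)"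
  proof (rule nn_integral_eq_integral)
    show "integrable M (\<lambda>\<omega>. psi \<theta> LA LB j (\<lambda>l. Cs l \<omega>) (\<lambda>l. Ds l \<omega>))"
      by (rule integrable_const_bound[where B=1]) (use psib psim in auto)
    show "AE \<omega> in M. 0 \<le> psi \<theta> LA LB j (\<lambda>l. Cs l \<omega>) (\<lambda>l. Ds l \<omega>)" using psib by auto
  qed
  also have "(\<integral>\<omega>. psi \<theta> LA LB j (\<lambda>l. Cs l \<omega>) (\<lambda>l. Ds l \<omega>) \<partial>M) =
      (lst C (\<theta> + LA) * (lst D (\<theta> + LA) - lst D (\<theta> + LB))) ^ j * (lst C (\<theta> + LA) * lst D (\<theta> + LB))"
    by (rule psi_expect[OF Cm Dm C0 D0 ind]) (use LA0 LAB \<theta> in auto)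
  finally show ?thesis unfolding LA_def LB_def .
qed

lemma lst_props:
  assumes P: "prob_space P" and s: "sets P = sets borel" and nn: "AE x in P. 0 \<le> x" and t: "0 \<le> t"
  shows "integrable P (\<lambda>x. exp (- t * x))" "0 < lst P t" "lst P t \<le> 1"
proof -
  interpret P: prob_space P by (rule P)
  have m: "(\<lambda>x. exp (- t * x)) \<in> borel_measurable P"
    by (subst measurable_cong_sets[OF s refl]) simp
  have b: "AE x in P. norm (exp (- t * x)) \<le> 1" using nn by eventually_elim (use t in simp)
  show int: "integrable P (\<lambda>x. exp (- t * x))" by (rule P.integrable_const_bound[OF b m])
  have "lst P t \<le> (\<integral>x. 1 \<partial>P)" unfolding lst_def
    by (rule integral_mono_AE[OF int]) (use b in auto)
  then show "lst P t \<le> 1" by (simp add: P.prob_space)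
  have "(\<integral>\<^sup>+x. ennreal (exp (- t * x)) \<partial>P) = ennreal (lst P t)"
    unfolding lst_def by (rule nn_integral_eq_integral[OF int]) simp
  moreover have "(\<integral>\<^sup>+x. ennreal (exp (- t * x)) \<partial>P) \<noteq> 0"
  proof
    assume "(\<integral>\<^sup>+x. ennreal (exp (- t * x)) \<partial>P) = 0"
    then have "AE x in P. ennreal (exp (- t * x)) = 0" by (subst (asm) nn_integral_0_iff_AE) (use m in auto)
    then have "AE x in P. False" by simp
    then show False by simp
  qed
  ultimately show "0 < lst P t" using \<open>lst P t \<le> 1\<close> by (auto simp: ennreal_eq_0_iff not_less intro: antisym)
qed

lemma lst_mono:
  assumes P: "prob_space P" and s: "sets P = sets borel" and nn: "AE x in P. 0 \<le> x" and t: "0 \<le> t" "t \<le> t'"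
  shows "lst P t' \<le> lst P t"
proof -
  have i1: "integrable P (\<lambda>x. exp (- t * x))" by (rule lst_props(1)[OF P s nn t(1)])
  have i2: "integrable P (\<lambda>x. exp (- t' * x))" by (rule lst_props(1)[OF P s nn]) (use t in auto)
  show ?thesis unfolding lst_def
  proof (rule integral_mono_AE[OF i2 i1])
    show "AE x in P. exp (- t' * x) \<le> exp (- t * x)" using nn
      by eventually_elim (use t in \<open>auto intro: mult_right_mono\<close>)
  qed
qed

lemma lst_zero: assumes "prob_space P" shows "lst P 0 = 1"
proof -
  interpret prob_space P by fact
  show ?thesis by (simp add: lst_def prob_space)
qed

theorem mainTheorem8:
  fixes M :: "'a measure" and n k :: nat and lam :: "nat \<Rightarrow> real"
    and A :: "nat \<Rightarrow> nat \<Rightarrow> 'a \<Rightarrow> real" and Cs Ds :: "nat \<Rightarrow> 'a \<Rightarrow> real"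
    and C D :: "real measure" and \<theta> :: real and z :: "nat \<Rightarrow> real"
  assumes M: "prob_space M"
    and k: "1 \<le> k" "k \<le> n"
    and lam_pos: "\<And>i. i \<in> {1..n} \<Longrightarrow> lam i > 0"
    and arr_exp: "\<And>i m. i \<in> {1..n} \<Longrightarrow> distributed M lborel (A i m) (exponential_density (lam i))"
    and pause_rv: "\<And>j. Cs j \<in> borel_measurable M" "\<And>j. distr M borel (Cs j) = C"
    and resume_rv: "\<And>j. Ds j \<in> borel_measurable M" "\<And>j. distr M borel (Ds j) = D"
    and C_nonneg: "AE x in C. 0 \<le> x"
    and D_nonneg: "AE x in D. 0 \<le> x"
    and indep: "prob_space.indep_vars M (\<lambda>_. borel) (src_rv A Cs Ds)
                  ({Arr i m | i m. i \<in> {1..n}} \<union> range Pause \<union> range Resume)"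
    and \<theta>: "0 \<le> \<theta>"
    and z: "\<And>i. i \<in> {1..n} \<Longrightarrow> z i \<in> {0..1}"
  shows
    "let Lam = (\<Sum>i\<in>{1..n}. lam i * (1 - z i));
         Lam_ge = (\<Sum>i\<in>{k..n}. lam i * (1 - z i));
         lam_lt = (\<Sum>i\<in>{1..<k}. lam i)
     in overhead_transform M n k A Cs Ds \<theta> z =
        lst C (\<theta> + Lam) * lst D (\<theta> + Lam_ge + lam_lt) /
        (1 - lst C (\<theta> + Lam) * (lst D (\<theta> + Lam) - lst D (\<theta> + Lam_ge + lam_lt)))"
proof -
  interpret prob_space M by (rule M)
  define A0 where "A0 i m \<omega> = (if i \<in> {1..n} then A i m \<omega> else 0)" for i m \<omega>
  define Ib where "Ib = {Arr i m | i m. i \<in> {1..n}} \<union> range Pause \<union> range Resume"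
  have kn: "k \<le> Suc n" using k by simp
  have ind0: "indep_vars (\<lambda>_. borel) (src_rv A0 Cs Ds) Ib"
    by (rule indep_vars_cong[THEN iffD1, OF refl _ refl indep[folded Ib_def]])
       (auto simp: Ib_def src_rv_def A0_def fun_eq_iff)
  have Am: "A i m \<in> borel_measurable M" if "i \<in> {1..n}" for i m
    using arr_exp[OF that, of m] by (auto simp: distributed_def)
  have A0m: "A0 i m \<in> borel_measurable M" for i m
  proof (cases "i \<in> {1..n}")
    case True
    then have "A0 i m = A i m" by (simp add: A0_def fun_eq_iff)
    then show ?thesis using Am[OF True] by simp
  next
    case False
    then have "A0 i m = (\<lambda>_. 0)" by (auto simp: A0_def fun_eq_iff)
    then show ?thesis by simp
  qed
  have srcA0: "src_rv A0 Cs Ds (Arr i m) = A0 i m" for i m by (simp add: src_rv_def)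
  have dist0: "distributed M lborel (src_rv A0 Cs Ds (Arr i m)) (exponential_density (lam i))" if "i \<in> {1..n}" for i m
  proof -
    have "A0 i m = A i m" using that by (simp add: A0_def fun_eq_iff)
    then show ?thesis using arr_exp[OF that] by (simp add: srcA0)
  qed
  have mp: "(\<integral>\<^sup>+\<omega>. ennreal (\<Prod>i\<in>{1..n}. \<Prod>q<Q. w i q ^ cnt (\<lambda>m. A0 i m \<omega>) (tg u q) (tg u (Suc q))) \<partial>M)
         = ennreal (\<Prod>i\<in>{1..n}. exp (- lam i * (\<Sum>q<Q. (1 - w i q) * u q)))"
    if u: "\<And>p. 0 \<le> u p" and w0: "\<And>i q. i \<in> {1..n} \<Longrightarrow> 0 \<le> w i q" and w1: "\<And>i q. i \<in> {1..n} \<Longrightarrow> w i q \<le> 1"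
    for u :: "nat \<Rightarrow> real" and w :: "nat \<Rightarrow> nat \<Rightarrow> real" and Q
  proof -
    define w' where "w' i q = (if i \<in> {1..n} then w i q else 0)" for i q
    have "(\<integral>\<^sup>+\<omega>. ennreal (\<Prod>i\<in>{1..n}. \<Prod>q<Q. w' i q ^ cnt (\<lambda>m. src_rv A0 Cs Ds (Arr i m) \<omega>) (tg u q) (tg u (Suc q))) \<partial>M)
         = ennreal (\<Prod>i\<in>{1..n}. exp (- lam i * (\<Sum>q<Q. (1 - w' i q) * u q)))"
      by (rule multi_poisson[where g="\<lambda>i m. Arr i m", OF ind0 finite_atLeastAtMost _ _ _ dist0 lam_pos u])
         (auto simp: Ib_def w'_def w0 w1 inj_def)
    moreover have "(\<Prod>i\<in>{1..n}. \<Prod>q<Q. w' i q ^ cnt (\<lambda>m. src_rv A0 Cs Ds (Arr i m) \<omega>) (tg u q) (tg u (Suc q)))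
        = (\<Prod>i\<in>{1..n}. \<Prod>q<Q. w i q ^ cnt (\<lambda>m. A0 i m \<omega>) (tg u q) (tg u (Suc q)))" for \<omega>
      by (intro prod.cong refl) (simp add: w'_def srcA0)
    moreover have "(\<Prod>i\<in>{1..n}. exp (- lam i * (\<Sum>q<Q. (1 - w' i q) * u q))) = (\<Prod>i\<in>{1..n}. exp (- lam i * (\<Sum>q<Q. (1 - w i q) * u q)))"
      by (intro prod.cong refl) (simp add: w'_def)
    ultimately show ?thesis by simp
  qed
  have gd: "AE \<omega> in M. \<forall>i\<in>{1..n}. good (\<lambda>m. A0 i m \<omega>)"
  proof (rule eventually_ball_finite[OF finite_atLeastAtMost], rule ballI)
    fix i assume i: "i \<in> {1..n}"
    have sd: "distr M (PiM UNIV (\<lambda>_::nat. borel)) (\<lambda>\<omega> m. src_rv A0 Cs Ds (Arr i m) \<omega>) = SeqM (lam i)"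
      by (rule class_seq_distr[OF ind0]) (use i dist0 in \<open>auto simp: Ib_def inj_def\<close>)
    then have sd': "distr M (PiM UNIV (\<lambda>_::nat. borel)) (\<lambda>\<omega> m. A0 i m \<omega>) = SeqM (lam i)"
      by (simp add: srcA0)
    have "AE x in SeqM (lam i). \<forall>h::nat. \<exists>M. real h < (\<Sum>j<M. x j)"
      by (subst AE_all_countable) (auto intro: SS_unbounded[OF lam_pos[OF i]])
    then have AEg: "AE x in SeqM (lam i). good x"
      using SS_nonneg[OF lam_pos[OF i]] by eventually_elim (auto simp: good_def)
    have rv: "(\<lambda>\<omega> m. A0 i m \<omega>) \<in> M \<rightarrow>\<^sub>M PiM UNIV (\<lambda>_::nat. borel)"
      by (rule measurable_PiM_single') (auto intro: A0m)
    have gs: "{x \<in> space (PiM UNIV (\<lambda>_::nat. borel)). good x} \<in> sets (PiM UNIV (\<lambda>_::nat. borel))"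
      using good_meas[OF measurable_ident_sets[OF refl]] by (simp add: pred_def)
    have "AE x in distr M (PiM UNIV (\<lambda>_::nat. borel)) (\<lambda>\<omega> m. A0 i m \<omega>). good x" unfolding sd' by (rule AEg)
    then show "AE \<omega> in M. good (\<lambda>m. A0 i m \<omega>)" by (subst (asm) AE_distr_iff[OF rv gs])
  qed
  have ind0': "indep_vars (\<lambda>_. borel) (src_rv A0 Cs Ds) ({Arr i m | i m. i \<in> {1..n}} \<union> range Pause \<union> range Resume)"
    using ind0 unfolding Ib_def .
  have zb: "\<And>i. i \<in> {1..n} \<Longrightarrow> 0 \<le> z i \<and> z i \<le> 1" using z by auto
  have Cp: "prob_space C" using prob_space_distr[OF pause_rv(1)[of 0]] pause_rv(2)[of 0] by simp
  have Dp: "prob_space D" using prob_space_distr[OF resume_rv(1)[of 0]] resume_rv(2)[of 0] by simp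
  have Cs: "sets C = sets borel" unfolding pause_rv(2)[symmetric, of 0] by simp
  have Dsets: "sets D = sets borel" unfolding resume_rv(2)[symmetric, of 0] by simp
  note jtt = jt_total[OF A0m pause_rv resume_rv C_nonneg D_nonneg ind0' mp gd k]
  define Succ where "Succ = {\<omega> \<in> space M. \<exists>j. \<not> resume_fails k A0 Cs Ds j \<omega>}"
  note [measurable] = A0m pause_rv(1) resume_rv(1)
  have Succ_ev: "Succ \<in> events" unfolding Succ_def by measurable
  have jt_nn: "0 \<le> jt n k A0 Cs Ds th zz j \<omega>" if "\<And>i. i \<in> {1..n} \<Longrightarrow> 0 \<le> zz i" for th zz j \<omega>
    unfolding jt_def using that by (auto intro!: mult_nonneg_nonneg prod_nonneg)
  have jt_m: "(\<lambda>\<omega>. jt n k A0 Cs Ds th zz j \<omega>) \<in> borel_measurable M" for th zz j by measurable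
  define p where "p = lst D (\<Sum>i\<in>{1..<k}. lam i)"
  have "0 \<le> (\<Sum>i\<in>{1..<k}. lam i)" using lam_pos k by (intro sum_nonneg) (auto intro: less_imp_le)
  then have p0: "0 < p" "p \<le> 1"
    using lst_props(2,3)[OF Dp Dsets D_nonneg, of "\<Sum>i\<in>{1..<k}. lam i"] by (auto simp: p_def)
  have J1: "(\<integral>\<^sup>+\<omega>. ennreal (jt n k A0 Cs Ds 0 (\<lambda>_. 1) j \<omega>) \<partial>M) = ennreal ((1 - p) ^ j * p)" for j
  proof -
    have "(\<integral>\<^sup>+\<omega>. ennreal (jt n k A0 Cs Ds 0 (\<lambda>_. 1) j \<omega>) \<partial>M) = ennreal (
      (lst C (0 + (\<Sum>i\<in>{1..n}. lam i * (1 - 1))) *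
      (lst D (0 + (\<Sum>i\<in>{1..n}. lam i * (1 - 1))) - lst D (0 + ((\<Sum>i\<in>{1..<k}. lam i) + (\<Sum>i\<in>{k..n}. lam i * (1 - 1)))))) ^ j *
      (lst C (0 + (\<Sum>i\<in>{1..n}. lam i * (1 - 1))) * lst D (0 + ((\<Sum>i\<in>{1..<k}. lam i) + (\<Sum>i\<in>{k..n}. lam i * (1 - 1))))))"
      by (rule jtt, blast, blast, blast) (auto intro: lam_pos)
    then show ?thesis by (simp add: lst_zero[OF Cp] lst_zero[OF Dp] p_def)
  qed
  have ind_sum: "(\<Sum>j. ennreal (jt n k A0 Cs Ds 0 (\<lambda>_. 1) j \<omega>)) = indicator Succ \<omega>" if \<omega>: "\<omega> \<in> space M" for \<omega>
  proof (cases "\<exists>j. \<not> resume_fails k A0 Cs Ds j \<omega>")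
    case True
    have "(\<lambda>j. jt n k A0 Cs Ds 0 (\<lambda>_. 1) j \<omega>) sums
       (exp (- 0 * chain_len k A0 Cs Ds \<omega>) * (\<Prod>i\<in>{1..n}. (\<lambda>_. 1::real) i ^ chain_arrivals k A0 Cs Ds i \<omega>))"
      by (rule F_sums[OF True])
    then have S: "(\<lambda>j. jt n k A0 Cs Ds 0 (\<lambda>_. 1) j \<omega>) sums 1" by simp
    have "(\<Sum>j. ennreal (jt n k A0 Cs Ds 0 (\<lambda>_. 1) j \<omega>)) = ennreal (\<Sum>j. jt n k A0 Cs Ds 0 (\<lambda>_. 1) j \<omega>)"
      by (rule suminf_ennreal2) (use S jt_nn in \<open>auto simp: sums_iff\<close>)
    also have "\<dots> = 1" using S by (simp add: sums_iff)
    finally show ?thesis using True \<omega> by (simp add: Succ_def indicator_def)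
  next
    case False
    then have "jt n k A0 Cs Ds 0 (\<lambda>_. 1) j \<omega> = 0" for j by (simp add: jt_def)
    then show ?thesis using False by (simp add: Succ_def indicator_def)
  qed
  have geo: "(\<lambda>j. (1 - p) ^ j * p) sums 1"
  proof -
    have "(\<lambda>j. (1 - p) ^ j) sums (1 / (1 - (1 - p)))" by (rule geometric_sums) (use p0 in auto)
    then have "(\<lambda>j. (1 - p) ^ j * p) sums (1 / (1 - (1 - p)) * p)" by (rule sums_mult2)
    then show ?thesis using p0 by simp
  qed
  have "emeasure M Succ = (\<integral>\<^sup>+\<omega>. indicator Succ \<omega> \<partial>M)" using Succ_ev by simp
  also have "\<dots> = (\<integral>\<^sup>+\<omega>. (\<Sum>j. ennreal (jt n k A0 Cs Ds 0 (\<lambda>_. 1) j \<omega>)) \<partial>M)"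
    by (intro nn_integral_cong) (simp add: ind_sum)
  also have "\<dots> = (\<Sum>j. \<integral>\<^sup>+\<omega>. ennreal (jt n k A0 Cs Ds 0 (\<lambda>_. 1) j \<omega>) \<partial>M)"
    by (rule nn_integral_suminf) measurable
  also have "\<dots> = (\<Sum>j. ennreal ((1 - p) ^ j * p))" unfolding J1 ..
  also have "\<dots> = ennreal 1"
    by (subst suminf_ennreal2) (use geo p0 in \<open>auto simp: sums_iff\<close>)
  finally have "prob Succ = 1" by (simp add: emeasure_eq_measure)
  then have AES: "AE \<omega> in M. \<omega> \<in> Succ" by (rule AE_prob_1)
  define LA where "LA = (\<Sum>i\<in>{1..n}. lam i * (1 - z i))"
  define LB where "LB = (\<Sum>i\<in>{1..<k}. lam i) + (\<Sum>i\<in>{k..n}. lam i * (1 - z i))"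
  have LA0: "0 \<le> LA" and LAB: "LA \<le> LB" unfolding LA_def LB_def using LA_le_LB[OF k lam_pos zb] by auto
  define r where "r = lst C (\<theta> + LA) * (lst D (\<theta> + LA) - lst D (\<theta> + LB))"
  define s where "s = lst C (\<theta> + LA) * lst D (\<theta> + LB)"
  have Jz: "(\<integral>\<^sup>+\<omega>. ennreal (jt n k A0 Cs Ds \<theta> z j \<omega>) \<partial>M) = ennreal (r ^ j * s)" for j
    unfolding r_def s_def LA_def LB_def by (rule jtt[OF _ _ _ zb lam_pos \<theta>]) blast+
  have c1: "0 < lst C (\<theta> + LA)" "lst C (\<theta> + LA) \<le> 1"
    using lst_props(2,3)[OF Cp Cs C_nonneg, of "\<theta> + LA"] \<theta> LA0 by auto
  have d1: "0 < lst D (\<theta> + LB)" "lst D (\<theta> + LA) \<le> 1"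
    using lst_props(2)[OF Dp Dsets D_nonneg, of "\<theta> + LB"] lst_props(3)[OF Dp Dsets D_nonneg, of "\<theta> + LA"]
      \<theta> LA0 LAB by auto
  have d2: "lst D (\<theta> + LB) \<le> lst D (\<theta> + LA)"
    by (rule lst_mono[OF Dp Dsets D_nonneg]) (use \<theta> LA0 LAB in auto)
  have r0: "0 \<le> r" unfolding r_def using c1 d2 by simp
  have r1: "r < 1"
  proof -
    have "r \<le> lst D (\<theta> + LA) - lst D (\<theta> + LB)" unfolding r_def using c1 d2 by (intro mult_left_le_one_le) auto
    then show ?thesis using d1 by linarith
  qed
  have s0: "0 \<le> s" unfolding s_def using c1 d1 by simp
  have geo2: "(\<lambda>j. r ^ j * s) sums (s / (1 - r))"
  proof -
    have "(\<lambda>j. r ^ j) sums (1 / (1 - r))" by (rule geometric_sums) (use r0 r1 in auto)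
    then have "(\<lambda>j. r ^ j * s) sums (1 / (1 - r) * s)" by (rule sums_mult2)
    then show ?thesis by simp
  qed
  define F where "F \<omega> = exp (- \<theta> * chain_len k A0 Cs Ds \<omega>) * (\<Prod>i\<in>{1..n}. z i ^ chain_arrivals k A0 Cs Ds i \<omega>)" for \<omega>
  have z0: "\<And>i. i \<in> {1..n} \<Longrightarrow> 0 \<le> z i" using zb by auto
  have F0: "0 \<le> F \<omega>" for \<omega> unfolding F_def using z0 by (auto intro!: mult_nonneg_nonneg prod_nonneg)
  have Fm: "F \<in> borel_measurable M" unfolding F_def by measurable
  have "(\<integral>\<^sup>+\<omega>. ennreal (F \<omega>) \<partial>M) = (\<integral>\<^sup>+\<omega>. (\<Sum>j. ennreal (jt n k A0 Cs Ds \<theta> z j \<omega>)) \<partial>M)"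
  proof (rule nn_integral_cong_AE)
    show "AE \<omega> in M. ennreal (F \<omega>) = (\<Sum>j. ennreal (jt n k A0 Cs Ds \<theta> z j \<omega>))"
      using AES
    proof eventually_elim
      case (elim \<omega>)
      then have ex: "\<exists>j. \<not> resume_fails k A0 Cs Ds j \<omega>" by (simp add: Succ_def)
      have S: "(\<lambda>j. jt n k A0 Cs Ds \<theta> z j \<omega>) sums F \<omega>" unfolding F_def by (rule F_sums[OF ex])
      have "(\<Sum>j. ennreal (jt n k A0 Cs Ds \<theta> z j \<omega>)) = ennreal (\<Sum>j. jt n k A0 Cs Ds \<theta> z j \<omega>)"
        by (rule suminf_ennreal2) (use S jt_nn[OF z0] in \<open>auto simp: sums_iff\<close>)
      then show ?case using S by (simp add: sums_iff)
    qed
  qed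
  also have "\<dots> = (\<Sum>j. \<integral>\<^sup>+\<omega>. ennreal (jt n k A0 Cs Ds \<theta> z j \<omega>) \<partial>M)"
    by (rule nn_integral_suminf) measurable
  also have "\<dots> = (\<Sum>j. ennreal (r ^ j * s))" unfolding Jz ..
  also have "\<dots> = ennreal (s / (1 - r))"
    by (subst suminf_ennreal2) (use geo2 r0 s0 in \<open>auto simp: sums_iff\<close>)
  finally have nnF: "(\<integral>\<^sup>+\<omega>. ennreal (F \<omega>) \<partial>M) = ennreal (s / (1 - r))" .
  have "overhead_transform M n k A Cs Ds \<theta> z = (\<integral>\<omega>. F \<omega> \<partial>M)"
    unfolding overhead_transform_def F_def
    by (intro Bochner_Integration.integral_cong refl integrand_cong[OF kn]) (simp add: A0_def)
  also have "\<dots> = enn2real (\<integral>\<^sup>+\<omega>. ennreal (F \<omega>) \<partial>M)"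
    by (rule integral_eq_nn_integral[OF Fm]) (simp add: F0)
  also have "\<dots> = s / (1 - r)" unfolding nnF using r1 s0 by simp
  finally have main: "overhead_transform M n k A Cs Ds \<theta> z = s / (1 - r)" .
  have eqB: "\<theta> + LB = \<theta> + (\<Sum>i\<in>{k..n}. lam i * (1 - z i)) + (\<Sum>i\<in>{1..<k}. lam i)"
    unfolding LB_def by simp
  show ?thesis unfolding Let_def main r_def s_def eqB LA_def ..
qed

end
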